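(* In the affine setting described in the context, let $\eta,\eta'\in A$ and let $\psi\in\mathcal{L}^2(\hat{Q},\nu_Q)$. Then the function $$\psi'(\phi):=\psi\big(\phi+q(\eta'-\eta)\big)\,\beta_{\eta,\eta'}(\phi),\qquad\phi\in\hat{Q},$$ is well defined as a function on $\hat{Q}$ and belongs to $\mathcal{L}^2(\hat{Q},\nu_Q)$. Moreover, the map $\mathcal{L}^2(\hat{Q},\nu_Q)\to\mathcal{L}^2(\hat{Q},\nu_Q)$, $\psi\mapsto\psi'$, is an isometric isomorphism.
   Context: $A$ is a real affine space over the vector space $L$. $\theta:A\times L\to\mathbb{R}$ is linear in the second argument and there is a bilinear $[\cdot,\cdot]:L\times L\to\mathbb{R}$ with $\theta(\eta+\xi,\tau)=\theta(\eta,\tau)+[\xi,\tau]$; $\omega(\xi,\xi')=\frac12[\xi,\xi']-\frac12[\xi',\xi]$ is non-degenerate. $M=\{\tau:[\xi,\tau]=0\ \forall\xi\in L\}$, $N=\{\tau:[\tau,\xi]=0\ \forall\xi\in L\}$, $L=M\oplus N$ assumed, $Q=L/M$ with quotient map $q$; $[\cdot,\cdot]$ descends to $L\times Q\to\mathbb{R}$. $\Omega:Q\times Q\to\mathbb{C}$ is symmetric bilinear with positive definite real part and admissible: $Q$ with inner product $\Re\Omega$ is a separable real Hilbert space, $\Im\Omega$ is continuous, each $\phi\mapsto[\xi,\phi]$ ($\xi\in L$) is continuous on $Q$, and every continuous linear functional on $Q$ has this form. $\hat{Q}$ is the algebraic dual of the topological dual $Q^*$, containing $Q$ canonically, with the initial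 topology of the evaluations at elements of $Q^*$; $\nu_Q$ is the Gaussian probability measure on $\hat{Q}$ with $\int\exp(\mathrm{i}x(\ell))\,\mathrm{d}\nu_Q(x)=\exp(-\frac14\|\ell\|^2)$ for $\ell\in Q^*$. $\mathcal{L}^2(\hat{Q},\nu_Q)$ denotes the (semi-normed) space of square-integrable functions. For $\eta,\eta'\in A$, $\beta_{\eta,\eta'}$ is the continuous function on $Q$ $$\beta_{\eta,\eta'}(\phi)=\exp\Big(\mathrm{i}\theta(\eta,\eta'-\eta)-\tfrac12\Omega(q(\eta'-\eta),q(\eta'-\eta))-\mathrm{i}[\eta'-\eta,\phi]-\Omega(q(\eta'-\eta),\phi)\Big),$$ which depends on $\phi$ only through continuous linear functionals and hence extends canonically to a continuous function on $\hat{Q}$ (a continuous function on $Q$ invariant under translations by a closed finite-codimension subspace $W$ factors through $Q/W$, which is also a quotient of $\hat{Q}$). *)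

theory Defs
  imports "HOL-Probability.Probability"
begin

text \<open>Affine space A (type 'a) over the real vector space L (type 'l):
  add eta xi is eta + xi, diff eta' eta is eta' - eta.\<close>
definition torsor :: "('a \<Rightarrow> 'l::real_vector \<Rightarrow> 'a) \<Rightarrow> ('a \<Rightarrow> 'a \<Rightarrow> 'l) \<Rightarrow> bool" where
  "torsor add diff \<longleftrightarrow>
     (\<forall>\<eta>. add \<eta> 0 = \<eta>) \<and>
     (\<forall>\<eta> \<xi> \<xi>'. add (add \<eta> \<xi>) \<xi>' = add \<eta> (\<xi> + \<xi>')) \<and>
     (\<forall>\<eta> \<eta>'. add \<eta> (diff \<eta>' \<eta>) = \<eta>') \<and>
     (\<forall>\<eta> \<xi>. diff (add \<eta> \<xi>) \<eta> = \<xi>)"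

definition omega :: "('l \<Rightarrow> 'l \<Rightarrow> real) \<Rightarrow> 'l \<Rightarrow> 'l \<Rightarrow> real" where
  "omega br \<xi> \<xi>' = br \<xi> \<xi>' / 2 - br \<xi>' \<xi> / 2"

definition Mset :: "('l \<Rightarrow> 'l \<Rightarrow> real) \<Rightarrow> 'l set" where
  "Mset br = {\<tau>. \<forall>\<xi>. br \<xi> \<tau> = 0}"

definition Nset :: "('l \<Rightarrow> 'l \<Rightarrow> real) \<Rightarrow> 'l set" where
  "Nset br = {\<tau>. \<forall>\<xi>. br \<tau> \<xi> = 0}"

text \<open>Q = L/M is represented by a real vector space 'q with a surjective linear map q
  whose kernel is exactly M (quotient up to canonical isomorphism).\<close>
definition quotient_map :: "('l::real_vector \<Rightarrow> 'q::real_vector) \<Rightarrow> 'l set \<Rightarrow> bool" where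
  "quotient_map q M \<longleftrightarrow> linear q \<and> surj q \<and> (\<forall>\<tau>. q \<tau> = 0 \<longleftrightarrow> \<tau> \<in> M)"

text \<open>The bracket descended to L x Q: [xi, q tau] = [xi, tau].\<close>
definition brQ :: "('l \<Rightarrow> 'l \<Rightarrow> real) \<Rightarrow> ('l \<Rightarrow> 'q) \<Rightarrow> 'l \<Rightarrow> 'q \<Rightarrow> real" where
  "brQ br q \<xi> \<phi> = br \<xi> (SOME \<tau>. q \<tau> = \<phi>)"

text \<open>Admissibility of Omega. The Hilbert structure on Q is the type class structure
  of 'q (real_inner + complete_space), whose inner product is required to be Re Omega.\<close>
definition admissible :: "('l \<Rightarrow> 'l \<Rightarrow> real) \<Rightarrow> ('l \<Rightarrow> 'q::real_inner) \<Rightarrow> ('q \<Rightarrow> 'q \<Rightarrow> complex) \<Rightarrow> bool" where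
  "admissible br q \<Omega> \<longleftrightarrow>
     (\<forall>x y. inner x y = Re (\<Omega> x y)) \<and>
     (\<exists>D::'q set. countable D \<and> closure D = UNIV) \<and>
     continuous_on UNIV (\<lambda>(x, y). Im (\<Omega> x y)) \<and>
     (\<forall>\<xi>. continuous_on UNIV (brQ br q \<xi>)) \<and>
     (\<forall>l::'q \<Rightarrow> real. linear l \<and> continuous_on UNIV l \<longrightarrow> (\<exists>\<xi>. l = brQ br q \<xi>))"

definition Qstar :: "('q::real_normed_vector \<Rightarrow> real) set" where
  "Qstar = {l. linear l \<and> continuous_on UNIV l}"

definition Qhat :: "(('q::real_normed_vector \<Rightarrow> real) \<Rightarrow> real) set" where
  "Qhat = {x \<in> extensional Qstar.
      (\<forall>l1\<in>Qstar. \<forall>l2\<in>Qstar. x (\<lambda>\<phi>. l1 \<phi> + l2 \<phi>) = x l1 + x l2) \<and>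
      (\<forall>c. \<forall>l\<in>Qstar. x (\<lambda>\<phi>. c * l \<phi>) = c * x l)}"

definition embQ :: "'q::real_normed_vector \<Rightarrow> (('q \<Rightarrow> real) \<Rightarrow> real)" where
  "embQ \<phi> = restrict (\<lambda>l. l \<phi>) Qstar"

definition hat_shift :: "'q::real_normed_vector \<Rightarrow> (('q \<Rightarrow> real) \<Rightarrow> real) \<Rightarrow> (('q \<Rightarrow> real) \<Rightarrow> real)" where
  "hat_shift c x = restrict (\<lambda>l. x l + l c) Qstar"

definition gaussian_Qhat :: "(('q::real_normed_vector \<Rightarrow> real) \<Rightarrow> real) measure \<Rightarrow> bool" where
  "gaussian_Qhat nu \<longleftrightarrow> prob_space nu \<and> space nu = Qhat \<and>
     sets nu = sets (restrict_space (Pi\<^sub>M Qstar (\<lambda>_. borel)) Qhat) \<and>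
     (\<forall>l\<in>Qstar. (\<integral>x. exp (\<i> * complex_of_real (x l)) \<partial>nu)
                 = complex_of_real (exp (- (onorm l)\<^sup>2 / 4)))"

definition L2 :: "'b measure \<Rightarrow> ('b \<Rightarrow> complex) set" where
  "L2 nu = {\<psi>. \<psi> \<in> borel_measurable nu \<and> integrable nu (\<lambda>x. (cmod (\<psi> x))\<^sup>2)}"

definition L2norm :: "'b measure \<Rightarrow> ('b \<Rightarrow> complex) \<Rightarrow> real" where
  "L2norm nu \<psi> = sqrt (\<integral>x. (cmod (\<psi> x))\<^sup>2 \<partial>nu)"

text \<open>beta_{eta,eta'} on Q, and its canonical extension to Q-hat (obtained by replacing
  each continuous linear functional l(phi) by x(l)).\<close>
definition beta :: "('a \<Rightarrow> 'l \<Rightarrow> real) \<Rightarrow> ('l \<Rightarrow> 'l \<Rightarrow> real) \<Rightarrow> ('l \<Rightarrow> 'q) \<Rightarrow> ('q \<Rightarrow> 'q \<Rightarrow> complex)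
     \<Rightarrow> ('a \<Rightarrow> 'a \<Rightarrow> 'l) \<Rightarrow> 'a \<Rightarrow> 'a \<Rightarrow> 'q \<Rightarrow> complex" where
  "beta \<theta> br q \<Omega> diff \<eta> \<eta>' \<phi> =
     exp (\<i> * complex_of_real (\<theta> \<eta> (diff \<eta>' \<eta>))
          - \<Omega> (q (diff \<eta>' \<eta>)) (q (diff \<eta>' \<eta>)) / 2
          - \<i> * complex_of_real (brQ br q (diff \<eta>' \<eta>) \<phi>)
          - \<Omega> (q (diff \<eta>' \<eta>)) \<phi>)"

definition beta_hat :: "('a \<Rightarrow> 'l \<Rightarrow> real) \<Rightarrow> ('l \<Rightarrow> 'l \<Rightarrow> real) \<Rightarrow> ('l \<Rightarrow> 'q) \<Rightarrow> ('q \<Rightarrow> 'q \<Rightarrow> complex)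
     \<Rightarrow> ('a \<Rightarrow> 'a \<Rightarrow> 'l) \<Rightarrow> 'a \<Rightarrow> 'a \<Rightarrow> (('q \<Rightarrow> real) \<Rightarrow> real) \<Rightarrow> complex" where
  "beta_hat \<theta> br q \<Omega> diff \<eta> \<eta>' x =
     exp (\<i> * complex_of_real (\<theta> \<eta> (diff \<eta>' \<eta>))
          - \<Omega> (q (diff \<eta>' \<eta>)) (q (diff \<eta>' \<eta>)) / 2
          - \<i> * complex_of_real (x (brQ br q (diff \<eta>' \<eta>)))
          - (complex_of_real (x (\<lambda>\<phi>. Re (\<Omega> (q (diff \<eta>' \<eta>)) \<phi>)))
             + \<i> * complex_of_real (x (\<lambda>\<phi>. Im (\<Omega> (q (diff \<eta>' \<eta>)) \<phi>)))))"

definition transf :: "('a \<Rightarrow> 'l \<Rightarrow> real) \<Rightarrow> ('l \<Rightarrow> 'l \<Rightarrow> real) \<Rightarrow> ('l \<Rightarrow> 'q::real_normed_vector)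
     \<Rightarrow> ('q \<Rightarrow> 'q \<Rightarrow> complex) \<Rightarrow> ('a \<Rightarrow> 'a \<Rightarrow> 'l) \<Rightarrow> 'a \<Rightarrow> 'a
     \<Rightarrow> ((('q \<Rightarrow> real) \<Rightarrow> real) \<Rightarrow> complex) \<Rightarrow> ((('q \<Rightarrow> real) \<Rightarrow> real) \<Rightarrow> complex)" where
  "transf \<theta> br q \<Omega> diff \<eta> \<eta>' \<psi> =
     (\<lambda>x. \<psi> (hat_shift (q (diff \<eta>' \<eta>)) x) * beta_hat \<theta> br q \<Omega> diff \<eta> \<eta>' x)"

end

theory Submission
  imports Defs
begin

lemma finite_char_unique:
  fixes M1 M2 :: "real measure"
  assumes fm: "finite_measure M1" "finite_measure M2"
    and s: "sets M1 = sets borel" "sets M2 = sets borel"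
    and ch: "\<And>t. (\<integral>x. iexp (t*x) \<partial>M1) = (\<integral>x. iexp (t*x) \<partial>M2)"
  shows "M1 = M2"
proof -
  interpret F1: finite_measure M1 by fact
  interpret F2: finite_measure M2 by fact
  have sp: "space M1 = UNIV" "space M2 = UNIV"
    using sets_eq_imp_space_eq[OF s(1)] sets_eq_imp_space_eq[OF s(2)] by auto
  have "(\<integral>x. iexp (0*x) \<partial>M1) = (\<integral>x. iexp (0*x) \<partial>M2)" by (rule ch)
  then have "complex_of_real (measure M1 (space M1)) = complex_of_real (measure M2 (space M2))"
    by simp
  then have meq: "measure M1 UNIV = measure M2 UNIV" using sp by simp
  define a where "a = measure M1 UNIV"
  show ?thesis
  proof (cases "a = 0")
    case True
    have z1: "emeasure M1 A = 0" if "A \<in> sets M1" for A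
    proof -
      have "emeasure M1 A \<le> emeasure M1 (space M1)" by (rule emeasure_space)
      also have "\<dots> = ennreal a" using sp a_def F1.emeasure_eq_measure by simp
      finally show ?thesis using True by simp
    qed
    have z2: "emeasure M2 A = 0" if "A \<in> sets M2" for A
    proof -
      have "emeasure M2 A \<le> emeasure M2 (space M2)" by (rule emeasure_space)
      also have "\<dots> = ennreal a" using sp a_def meq F2.emeasure_eq_measure by simp
      finally show ?thesis using True by simp
    qed
    show ?thesis by (rule measure_eqI) (use s z1 z2 in auto)
  next
    case False
    then have apos: "a > 0" using a_def by (simp add: order_less_le)
    define N1 where "N1 = density M1 (\<lambda>_. ennreal (1/a))"
    define N2 where "N2 = density M2 (\<lambda>_. ennreal (1/a))"
    have e1: "emeasure N1 A = ennreal (1/a) * emeasure M1 A" if "A \<in> sets M1" for A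
      unfolding N1_def using that by (rule emeasure_density_const)
    have e2: "emeasure N2 A = ennreal (1/a) * emeasure M2 A" if "A \<in> sets M2" for A
      unfolding N2_def using that by (rule emeasure_density_const)
    have rd1: "real_distribution N1"
      unfolding real_distribution_def real_distribution_axioms_def
    proof (intro conjI prob_spaceI)
      have U1: "UNIV \<in> sets M1" using sets.top[of M1] sp by simp
      show "emeasure N1 (space N1) = 1"
        using e1[OF U1] sp apos a_def F1.emeasure_eq_measure
        by (simp add: N1_def ennreal_mult[symmetric])
      show "sets N1 = sets borel" using s by (simp add: N1_def)
    qed
    have rd2: "real_distribution N2"
      unfolding real_distribution_def real_distribution_axioms_def
    proof (intro conjI prob_spaceI)
      have U2: "UNIV \<in> sets M2" using sets.top[of M2] sp by simp
      show "emeasure N2 (space N2) = 1"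
        using e2[OF U2] sp apos a_def meq F2.emeasure_eq_measure
        by (simp add: N2_def ennreal_mult[symmetric])
      show "sets N2 = sets borel" using s by (simp add: N2_def)
    qed
    have "char N1 = char N2"
    proof
      fix t
      have "char N1 t = (\<integral>x. (1/a) *\<^sub>R iexp (t*x) \<partial>M1)"
        unfolding char_def N1_def using apos s
        by (subst integral_density) auto
      also have "\<dots> = (1/a) *\<^sub>R (\<integral>x. iexp (t*x) \<partial>M1)" by simp
      also have "\<dots> = (1/a) *\<^sub>R (\<integral>x. iexp (t*x) \<partial>M2)" using ch by simp
      also have "\<dots> = (\<integral>x. (1/a) *\<^sub>R iexp (t*x) \<partial>M2)" by simp
      also have "\<dots> = char N2 t"
        unfolding char_def N2_def using apos s
        by (subst integral_density) auto
      finally show "char N1 t = char N2 t" .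
    qed
    then have NN: "N1 = N2" using Levy_uniqueness rd1 rd2 by blast
    show ?thesis
    proof (rule measure_eqI)
      show "sets M1 = sets M2" using s by simp
      fix A assume A: "A \<in> sets M1"
      then have A2: "A \<in> sets M2" using s by simp
      have "ennreal (1/a) * emeasure M1 A = ennreal (1/a) * emeasure M2 A"
        using e1[OF A] e2[OF A2] NN by simp
      moreover have "ennreal (1/a) \<noteq> 0" "ennreal (1/a) \<noteq> top" using apos by auto
      ultimately show "emeasure M1 A = emeasure M2 A"
        unfolding ennreal_mult_cancel_left by blast
    qed
  qed
qed

lemma cos_iexp: "complex_of_real (cos t) = (iexp t + iexp (-t)) / 2"
  using cos_exp_eq[of "complex_of_real t"] by (simp add: cos_of_real)

lemma sin_iexp: "complex_of_real (sin t) = (iexp t - iexp (-t)) / (2*\<i>)"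
  using sin_exp_eq[of "complex_of_real t"] by (simp add: sin_of_real)

lemma iexp_cos_sin: "iexp t = complex_of_real (cos t) + \<i> * complex_of_real (sin t)"
  by (simp add: cis_conv_exp[symmetric] cis.ctr complex_eq_iff)

lemma weighted_unique:
  fixes m1 m2 :: "'x measure" and g w :: "'x \<Rightarrow> real"
  assumes fm: "finite_measure m1" "finite_measure m2"
    and s: "sets m1 = sets m2"
    and g[measurable]: "g \<in> borel_measurable m1"
    and w[measurable]: "w \<in> borel_measurable m1"
    and wpos: "\<And>x. 0 \<le> w x" and wb: "\<And>x. w x \<le> C"
    and ch: "\<And>t. (\<integral>x. w x *\<^sub>R iexp (t * g x) \<partial>m1) = (\<integral>x. w x *\<^sub>R iexp (t * g x) \<partial>m2)"
    and B: "B \<in> sets borel"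
  shows "(\<integral>x. w x * indicator B (g x) \<partial>m1) = (\<integral>x. w x * indicator B (g x) \<partial>m2)"
proof -
  interpret F1: finite_measure m1 by fact
  interpret F2: finite_measure m2 by fact
  have g2[measurable]: "g \<in> borel_measurable m2" using g unfolding measurable_cong_sets[OF s refl] .
  have w2[measurable]: "w \<in> borel_measurable m2" using w unfolding measurable_cong_sets[OF s refl] .
  define P1 where "P1 = distr (density m1 (\<lambda>x. ennreal (w x))) borel g"
  define P2 where "P2 = distr (density m2 (\<lambda>x. ennreal (w x))) borel g"
  have fin: "finite_measure (density m (\<lambda>x. ennreal (w x)))"
    if "finite_measure m" "w \<in> borel_measurable m" for m :: "'x measure"
  proof -
    interpret F: finite_measure m by fact
    have "emeasure (density m (\<lambda>x. ennreal (w x))) (space m) = (\<integral>\<^sup>+x. ennreal (w x) \<partial>m)"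
      using that by (simp add: emeasure_density nn_integral_set_ennreal[symmetric])
    also have "\<dots> \<le> (\<integral>\<^sup>+x. ennreal C \<partial>m)"
      by (intro nn_integral_mono) (simp add: wb ennreal_leI)
    also have "\<dots> < \<infinity>" by (simp add: F.emeasure_eq_measure ennreal_mult_less_top)
    finally show ?thesis by (intro finite_measureI) simp
  qed
  have fP1: "finite_measure P1" unfolding P1_def
    by (intro finite_measure.finite_measure_distr fin fm) auto
  have fP2: "finite_measure P2" unfolding P2_def
    by (intro finite_measure.finite_measure_distr fin fm w2) auto
  have "P1 = P2"
  proof (rule finite_char_unique[OF fP1 fP2])
    show "sets P1 = sets borel" "sets P2 = sets borel" by (simp_all add: P1_def P2_def)
    fix t
    have "(\<integral>y. iexp (t*y) \<partial>P1) = (\<integral>x. w x *\<^sub>R iexp (t * g x) \<partial>m1)"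
      unfolding P1_def using wpos
      by (simp add: integral_distr integral_density)
    also have "\<dots> = (\<integral>x. w x *\<^sub>R iexp (t * g x) \<partial>m2)" by (rule ch)
    also have "\<dots> = (\<integral>y. iexp (t*y) \<partial>P2)"
      unfolding P2_def using wpos
      by (simp add: integral_distr integral_density)
    finally show "(\<integral>y. iexp (t*y) \<partial>P1) = (\<integral>y. iexp (t*y) \<partial>P2)" .
  qed
  have "(\<integral>x. w x * indicator B (g x) \<partial>m1) = (\<integral>y. indicator B y \<partial>P1)"
    unfolding P1_def using wpos B
    apply (subst integral_distr)
      apply (simp_all add: borel_measurable_indicator)
    apply (subst integral_density)
       apply (simp_all add: borel_measurable_indicator)
    done
  also have "\<dots> = (\<integral>y. indicator B y \<partial>P2)" using \<open>P1 = P2\<close> by simp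
  also have "\<dots> = (\<integral>x. w x * indicator B (g x) \<partial>m2)"
    unfolding P2_def using wpos B
    apply (subst integral_distr)
      apply (simp_all add: borel_measurable_indicator)
    apply (subst integral_density)
       apply (simp_all add: borel_measurable_indicator)
    done
  finally show ?thesis .
qed

lemma bounded_integrable:
  fixes h :: "'x \<Rightarrow> 'b::{banach,second_countable_topology}"
  assumes "finite_measure m" "h \<in> borel_measurable m" "\<And>x. norm (h x) \<le> C"
  shows "integrable m h"
  using assms by (intro finite_measure.integrable_const_bound[where B=C]) auto

lemma iexp_norm[simp]: "norm (iexp t) = 1"
  by simp

lemma finite_measure_restricted:
  assumes "finite_measure m" "A \<in> sets m"
  shows "finite_measure (density m (indicator A))"
proof -
  interpret finite_measure m by fact
  show ?thesis
    by (rule finite_measureI) (simp add: emeasure_restricted assms(2))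
qed

lemma cyl_unique_aux:
  fixes f :: "'i \<Rightarrow> 'x \<Rightarrow> real"
  assumes "finite J"
  shows "\<And>m1 m2 B. finite_measure m1 \<Longrightarrow> finite_measure m2 \<Longrightarrow> sets m1 = sets m2 \<Longrightarrow>
    (\<forall>j\<in>J. f j \<in> borel_measurable m1) \<Longrightarrow>
    (\<forall>t. (\<integral>x. iexp (\<Sum>j\<in>J. t j * f j x) \<partial>m1) = (\<integral>x. iexp (\<Sum>j\<in>J. t j * f j x) \<partial>m2)) \<Longrightarrow>
    (\<forall>j\<in>J. B j \<in> sets borel) \<Longrightarrow>
    emeasure m1 {x\<in>space m1. \<forall>j\<in>J. f j x \<in> B j} = emeasure m2 {x\<in>space m2. \<forall>j\<in>J. f j x \<in> B j}"
  using assms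
proof (induction J)
  case empty
  interpret F1: finite_measure m1 by fact
  interpret F2: finite_measure m2 by fact
  have "(\<integral>x. iexp (\<Sum>j\<in>{}. t j * f j x) \<partial>m1) = (\<integral>x. iexp (\<Sum>j\<in>{}. t j * f j x) \<partial>m2)" for t
    using empty by blast
  then have "measure m1 (space m1) = measure m2 (space m2)" by simp
  then show ?case by (simp add: F1.emeasure_eq_measure F2.emeasure_eq_measure)
next
  case (insert j J)
  interpret F1: finite_measure m1 by fact
  interpret F2: finite_measure m2 by fact
  have sp: "space m1 = space m2" using insert.prems(3) by (rule sets_eq_imp_space_eq)
  have fm1[measurable]: "f i \<in> borel_measurable m1" if "i \<in> insert j J" for i
    using insert.prems(4) that by blast
  have fm2[measurable]: "f i \<in> borel_measurable m2" if "i \<in> insert j J" for i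
    using fm1[OF that] unfolding measurable_cong_sets[OF insert.prems(3) refl] .
  have Bj: "B j \<in> sets borel" using insert.prems(6) by blast
  have hyp: "(\<integral>x. iexp (\<Sum>i\<in>insert j J. t i * f i x) \<partial>m1) = (\<integral>x. iexp (\<Sum>i\<in>insert j J. t i * f i x) \<partial>m2)" for t
    using insert.prems(5) by blast
  have sum_ins: "(\<Sum>i\<in>insert j J. (t(j:=s)) i * f i x) = s * f j x + (\<Sum>i\<in>J. t i * f i x)" for t s x
    using insert(1,2) by (simp add: sum.insert) (intro sum.cong, auto)
  have hyp2: "(\<integral>x. iexp (s * f j x + (\<Sum>i\<in>J. t i * f i x)) \<partial>m1) = (\<integral>x. iexp (s * f j x + (\<Sum>i\<in>J. t i * f i x)) \<partial>m2)" for s t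
    using hyp[of "t(j:=s)"] unfolding sum_ins .
  have hyp0: "(\<integral>x. iexp (s * f j x) \<partial>m1) = (\<integral>x. iexp (s * f j x) \<partial>m2)" for s
    using hyp2[of s "\<lambda>_. 0"] by simp
  define A1 where "A1 = {x\<in>space m1. f j x \<in> B j}"
  have A1: "A1 \<in> sets m1" unfolding A1_def using Bj fm1[of j] by measurable
  have A2: "A1 \<in> sets m2" using A1 insert.prems(3) by simp
  define n1 where "n1 = density m1 (indicator A1)"
  define n2 where "n2 = density m2 (indicator A1)"
  have key: "(\<integral>x. indicator (B j) (f j x) * g (\<Sum>i\<in>J. t i * f i x) \<partial>m1) =
             (\<integral>x. indicator (B j) (f j x) * g (\<Sum>i\<in>J. t i * f i x) \<partial>m2)"
    if gsel: "g = cos \<or> g = sin" for g t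
  proof -
    define th where "th x = (\<Sum>i\<in>J. t i * f i x)" for x
    have th1[measurable]: "th \<in> borel_measurable m1" unfolding th_def using fm1 by measurable
    have th2[measurable]: "th \<in> borel_measurable m2" unfolding th_def using fm2 by measurable
    have gm[measurable]: "g \<in> borel_measurable borel" using gsel by auto
    have gb: "\<bar>g y\<bar> \<le> 1" for y using gsel by auto
    have g1: "0 \<le> 1 + g y" "1 + g y \<le> 2" for y using gb[of y] by (auto simp: abs_le_iff)
    have gexp: "complex_of_real (g y) = (iexp y + iexp (-y)) / 2 \<or> complex_of_real (g y) = (iexp y - iexp (-y)) / (2*\<i>)" for y
      using gsel cos_iexp sin_iexp by auto
    have int: "integrable m (\<lambda>x. iexp (s * f j x + c * th x))" if "finite_measure m" "f j \<in> borel_measurable m" "th \<in> borel_measurable m" for m s c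
      by (rule bounded_integrable[where C=1]) (use that in auto)
    have exp_id: "(1 + g (th x)) *\<^sub>R iexp (s * f j x) = iexp (s * f j x) +
        (if g = cos then (iexp (s * f j x + th x) + iexp (s * f j x + (-1) * th x)) / 2
         else (iexp (s * f j x + th x) - iexp (s * f j x + (-1) * th x)) / (2*\<i>))" for x s
    proof -
      define E where "E = iexp (s * f j x)"
      define P where "P = iexp (th x)"
      define Q where "Q = iexp (- th x)"
      have a: "(1 + g (th x)) *\<^sub>R E = E + complex_of_real (g (th x)) * E"
        by (simp add: scaleR_conv_of_real algebra_simps)
      have b: "P * E = iexp (s * f j x + th x)" unfolding P_def E_def
        by (simp add: exp_add[symmetric] algebra_simps)
      have c: "Q * E = iexp (s * f j x + (-1) * th x)" unfolding Q_def E_def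
        by (simp add: exp_add[symmetric] algebra_simps)
      have d1: "(P + Q) / 2 * E = (P * E + Q * E) / 2"
        by (simp add: times_divide_eq_left distrib_right)
      have d2: "(P - Q) / (2*\<i>) * E = (P * E - Q * E) / (2*\<i>)"
        by (simp add: times_divide_eq_left left_diff_distrib)
      show ?thesis
      proof (cases "g = cos")
        case True
        then show ?thesis using a d1 unfolding b c by (simp add: cos_iexp P_def Q_def E_def)
      next
        case False
        then have "g = sin" using gsel by blast
        then show ?thesis using a d2 False unfolding b c by (simp add: sin_iexp P_def Q_def E_def)
      qed
    qed
    have sum_sc: "(\<Sum>i\<in>J. (c * t i) * f i x) = c * th x" for c x
      unfolding th_def by (simp add: sum_distrib_left algebra_simps)
    have hyp3: "(\<integral>x. iexp (s * f j x + c * th x) \<partial>m1) = (\<integral>x. iexp (s * f j x + c * th x) \<partial>m2)" for s c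
      using hyp2[of s "\<lambda>i. c * t i"] unfolding sum_sc .
    have E1: "(\<integral>x. (1 + g (th x)) *\<^sub>R iexp (s * f j x) \<partial>m1) = (\<integral>x. (1 + g (th x)) *\<^sub>R iexp (s * f j x) \<partial>m2)" for s
    proof -
      have I: "(\<integral>x. (1 + g (th x)) *\<^sub>R iexp (s * f j x) \<partial>m) =
        (\<integral>x. iexp (s * f j x) \<partial>m) +
        (if g = cos then ((\<integral>x. iexp (s * f j x + 1 * th x) \<partial>m) + (\<integral>x. iexp (s * f j x + (-1) * th x) \<partial>m)) / 2
         else ((\<integral>x. iexp (s * f j x + 1 * th x) \<partial>m) - (\<integral>x. iexp (s * f j x + (-1) * th x) \<partial>m)) / (2*\<i>))"
        if "finite_measure m" "f j \<in> borel_measurable m" "th \<in> borel_measurable m" for m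
      proof -
        have i0: "integrable m (\<lambda>x. iexp (s * f j x))"
          by (rule bounded_integrable[where C=1]) (use that in auto)
        note i1 = int[OF that, of s 1] and i2 = int[OF that, of s "-1"]
        show ?thesis
          unfolding exp_id using i0 i1 i2
          by (cases "g = cos") (simp_all add: Bochner_Integration.integral_add Bochner_Integration.integral_diff integral_divide_zero)
      qed
      show ?thesis
        using I[OF insert.prems(1) fm1[of j] th1] I[OF insert.prems(2) fm2[of j] th2] hyp0[of s] hyp3[of s 1] hyp3[of s "-1"]
        by simp
    qed
    have wu1: "(\<integral>x. (1 + g (th x)) * indicator (B j) (f j x) \<partial>m1) = (\<integral>x. (1 + g (th x)) * indicator (B j) (f j x) \<partial>m2)"
      by (rule weighted_unique[OF insert.prems(1,2,3) fm1[of j] _ _ _ E1 Bj, where C=2])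
         (use g1 in auto)
    have wu0: "(\<integral>x. (1::real) * indicator (B j) (f j x) \<partial>m1) = (\<integral>x. (1::real) * indicator (B j) (f j x) \<partial>m2)"
      using weighted_unique[OF insert.prems(1,2,3) fm1[of j], where w="\<lambda>_. 1" and C=1 and B="B j"] Bj hyp0 by simp
    have D: "(\<integral>x. indicator (B j) (f j x) * g (th x) \<partial>m) =
       (\<integral>x. (1 + g (th x)) * indicator (B j) (f j x) \<partial>m) - (\<integral>x. (1::real) * indicator (B j) (f j x) \<partial>m)"
      if "finite_measure m" "f j \<in> borel_measurable m" "th \<in> borel_measurable m" for m
    proof -
      have a: "integrable m (\<lambda>x. (1 + g (th x)) * indicator (B j) (f j x))"
        by (rule bounded_integrable[where C=2]) (use that Bj g1 in \<open>auto simp: indicator_def\<close>)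
      have b: "integrable m (\<lambda>x. (1::real) * indicator (B j) (f j x))"
        by (rule bounded_integrable[where C=1]) (use that Bj in \<open>auto simp: indicator_def\<close>)
      show ?thesis
        by (subst Bochner_Integration.integral_diff[OF a b, symmetric]) (simp add: algebra_simps)
    qed
    show ?thesis
      using D[OF insert.prems(1) fm1[of j] th1] D[OF insert.prems(2) fm2[of j] th2] wu1 wu0
      unfolding th_def by simp
  qed
  have chJ: "(\<integral>x. iexp (\<Sum>i\<in>J. t i * f i x) \<partial>n1) = (\<integral>x. iexp (\<Sum>i\<in>J. t i * f i x) \<partial>n2)" for t
  proof -
    have R: "(\<integral>x. iexp (\<Sum>i\<in>J. t i * f i x) \<partial>density m (indicator A1)) =
      complex_of_real (\<integral>x. indicator (B j) (f j x) * cos (\<Sum>i\<in>J. t i * f i x) \<partial>m) +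
      \<i> * complex_of_real (\<integral>x. indicator (B j) (f j x) * sin (\<Sum>i\<in>J. t i * f i x) \<partial>m)"
      if "finite_measure m" "sets m = sets m1" for m
    proof -
      have spm: "space m = space m1" using that(2) by (rule sets_eq_imp_space_eq)
      have [measurable]: "f i \<in> borel_measurable m" if "i \<in> insert j J" for i
        using fm1[OF that] unfolding measurable_cong_sets[OF \<open>sets m = sets m1\<close> refl] .
      have Am: "A1 \<in> sets m" using A1 that(2) by simp
      have "(\<integral>x. iexp (\<Sum>i\<in>J. t i * f i x) \<partial>density m (indicator A1)) =
            (\<integral>x. indicator A1 x *\<^sub>R iexp (\<Sum>i\<in>J. t i * f i x) \<partial>m)"
      proof -
        have "density m (indicator A1) = density m (\<lambda>x. ennreal (indicator A1 x))"
          by (simp add: ennreal_indicator)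
        then show ?thesis
          using Am by (simp only:) (subst integral_density, auto simp: borel_measurable_indicator)
      qed
      also have "\<dots> = (\<integral>x. complex_of_real (indicator (B j) (f j x) * cos (\<Sum>i\<in>J. t i * f i x)) +
                          \<i> * complex_of_real (indicator (B j) (f j x) * sin (\<Sum>i\<in>J. t i * f i x)) \<partial>m)"
        by (intro Bochner_Integration.integral_cong refl, subst iexp_cos_sin) (auto simp: A1_def spm indicator_def scaleR_conv_of_real algebra_simps)
      also have "\<dots> = complex_of_real (\<integral>x. indicator (B j) (f j x) * cos (\<Sum>i\<in>J. t i * f i x) \<partial>m) +
                 \<i> * complex_of_real (\<integral>x. indicator (B j) (f j x) * sin (\<Sum>i\<in>J. t i * f i x) \<partial>m)"
      proof -
        have a: "integrable m (\<lambda>x. indicator (B j) (f j x) * cos (\<Sum>i\<in>J. t i * f i x))"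
          by (rule bounded_integrable[where C=1]) (use that Bj in \<open>auto simp: indicator_def\<close>)
        have b: "integrable m (\<lambda>x. indicator (B j) (f j x) * sin (\<Sum>i\<in>J. t i * f i x))"
          by (rule bounded_integrable[where C=1]) (use that Bj in \<open>auto simp: indicator_def\<close>)
        have a': "integrable m (\<lambda>x. complex_of_real (indicator (B j) (f j x) * cos (\<Sum>i\<in>J. t i * f i x)))"
          using a by (rule integrable_of_real)
        have b': "integrable m (\<lambda>x. \<i> * complex_of_real (indicator (B j) (f j x) * sin (\<Sum>i\<in>J. t i * f i x)))"
          using b by (intro integrable_mult_right integrable_of_real)
        show ?thesis
          by (simp only: Bochner_Integration.integral_add[OF a' b'] integral_mult_right_zero integral_complex_of_real)
      qed
      finally show ?thesis .
    qed
    show ?thesis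
      unfolding n1_def n2_def
      using R[OF insert.prems(1) refl] R[OF insert.prems(2) insert.prems(3)[symmetric]] key[of cos t] key[of sin t]
      by simp
  qed
  have fn1: "finite_measure n1" unfolding n1_def
    by (rule finite_measure_restricted[OF insert.prems(1)]) (rule A1)
  have fn2: "finite_measure n2" unfolding n2_def
    by (rule finite_measure_restricted[OF insert.prems(2)]) (rule A2)
  have IH: "emeasure n1 {x\<in>space n1. \<forall>i\<in>J. f i x \<in> B i} = emeasure n2 {x\<in>space n2. \<forall>i\<in>J. f i x \<in> B i}"
    by (rule insert.IH[OF fn1 fn2])
       (use insert.prems(3,6) fm1 chJ in \<open>auto simp: n1_def n2_def\<close>)
  have S1: "{x\<in>space m1. \<forall>i\<in>insert j J. f i x \<in> B i} = A1 \<inter> {x\<in>space n1. \<forall>i\<in>J. f i x \<in> B i}"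
    by (auto simp: A1_def n1_def)
  have S2: "{x\<in>space m2. \<forall>i\<in>insert j J. f i x \<in> B i} = A1 \<inter> {x\<in>space n2. \<forall>i\<in>J. f i x \<in> B i}"
    by (auto simp: A1_def n2_def sp)
  have M1: "{x\<in>space n1. \<forall>i\<in>J. f i x \<in> B i} \<in> sets m1"
  proof -
    have "{x\<in>space m1. \<forall>i\<in>J. f i x \<in> B i} \<in> sets m1"
    proof (rule sets.sets_Collect_finite_All[OF _ insert(1)])
      fix i assume "i \<in> J"
      then show "{x\<in>space m1. f i x \<in> B i} \<in> sets m1"
        using insert.prems(6) fm1[of i] by (auto intro: measurable_sets)
    qed
    then show ?thesis by (simp add: n1_def)
  qed
  have M2: "{x\<in>space n2. \<forall>i\<in>J. f i x \<in> B i} \<in> sets m2"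
    using M1 insert.prems(3) by (simp add: n1_def n2_def sp)
  show ?case
    unfolding S1 S2 using IH M1 M2 A1 A2
    by (simp add: n1_def n2_def emeasure_restricted)
qed

lemma sigma_sets_trace:
  assumes G: "G \<subseteq> Pow X" and O: "\<Omega> \<subseteq> X"
  shows "sigma_sets \<Omega> ((\<lambda>A. A \<inter> \<Omega>) ` G) = (\<lambda>A. A \<inter> \<Omega>) ` sigma_sets X G"
proof (intro equalityI subsetI)
  fix a assume "a \<in> sigma_sets \<Omega> ((\<lambda>A. A \<inter> \<Omega>) ` G)"
  then show "a \<in> (\<lambda>A. A \<inter> \<Omega>) ` sigma_sets X G"
  proof induction
    case (Basic a)
    then show ?case by (auto intro: sigma_sets.Basic)
  next
    case Empty
    show ?case by (rule image_eqI[of _ _ "{}"]) (auto intro: sigma_sets.Empty)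
  next
    case (Compl a)
    then obtain A where A: "a = A \<inter> \<Omega>" "A \<in> sigma_sets X G" by auto
    have "\<Omega> - a = (X - A) \<inter> \<Omega>" using A O by auto
    moreover have "X - A \<in> sigma_sets X G" using A(2) by (rule sigma_sets.Compl)
    ultimately show ?case by (rule image_eqI[where f="\<lambda>A. A \<inter> \<Omega>"])
  next
    case (Union a)
    have "\<forall>i. \<exists>A. a i = A \<inter> \<Omega> \<and> A \<in> sigma_sets X G" using Union.IH by blast
    then obtain A where A: "\<And>i. a i = A i \<inter> \<Omega>" "\<And>i. A i \<in> sigma_sets X G" by metis
    have "(\<Union>i. a i) = (\<Union>i. A i) \<inter> \<Omega>" using A by auto
    moreover have "(\<Union>i. A i) \<in> sigma_sets X G" using A(2) by (rule sigma_sets.Union)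
    ultimately show ?case by (rule image_eqI[where f="\<lambda>A. A \<inter> \<Omega>"])
  qed
next
  fix a assume "a \<in> (\<lambda>A. A \<inter> \<Omega>) ` sigma_sets X G"
  then obtain A where A: "a = A \<inter> \<Omega>" "A \<in> sigma_sets X G" by auto
  have "A \<inter> \<Omega> \<in> sigma_sets \<Omega> ((\<lambda>A. A \<inter> \<Omega>) ` G)" using A(2)
  proof induction
    case (Basic a)
    then show ?case by (auto intro: sigma_sets.Basic)
  next
    case Empty
    show ?case using sigma_sets.Empty by simp
  next
    case (Compl a)
    have "(X - a) \<inter> \<Omega> = \<Omega> - (a \<inter> \<Omega>)" using O by auto
    moreover have "\<Omega> - (a \<inter> \<Omega>) \<in> sigma_sets \<Omega> ((\<lambda>A. A \<inter> \<Omega>) ` G)"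
      using Compl.IH by (rule sigma_sets.Compl)
    ultimately show ?case by simp
  next
    case (Union a)
    have "(\<Union>i. a i) \<inter> \<Omega> = (\<Union>i. a i \<inter> \<Omega>)" by auto
    moreover have "(\<Union>i. a i \<inter> \<Omega>) \<in> sigma_sets \<Omega> ((\<lambda>A. A \<inter> \<Omega>) ` G)"
      using Union.IH by (rule sigma_sets.Union)
    ultimately show ?case by simp
  qed
  then show "a \<in> sigma_sets \<Omega> ((\<lambda>A. A \<inter> \<Omega>) ` G)" using A by simp
qed

lemma Qstar_zero: "(\<lambda>\<phi>. 0) \<in> Qstar"
  by (simp add: Qstar_def linear_zero)

lemma Qstar_add: "l1 \<in> Qstar \<Longrightarrow> l2 \<in> Qstar \<Longrightarrow> (\<lambda>\<phi>. l1 \<phi> + l2 \<phi>) \<in> Qstar"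
  by (auto simp: Qstar_def linear_add linear_scale algebra_simps intro!: linearI continuous_on_add)

lemma Qstar_cmult: "l \<in> Qstar \<Longrightarrow> (\<lambda>\<phi>. c * l \<phi>) \<in> Qstar"
  by (auto simp: Qstar_def linear_add linear_scale algebra_simps intro!: linearI continuous_on_mult_left)

lemma Qstar_sum: "finite J \<Longrightarrow> J \<subseteq> Qstar \<Longrightarrow> (\<lambda>\<phi>. \<Sum>j\<in>J. t j * j \<phi>) \<in> Qstar"
proof (induction J rule: finite_induct)
  case empty then show ?case by (simp add: Qstar_zero)
next
  case (insert i J)
  then show ?case by (simp add: Qstar_add Qstar_cmult)
qed

lemma Qhat_zero: assumes "x \<in> Qhat" shows "x (\<lambda>\<phi>. 0) = 0"
proof -
  have h: "\<forall>c. \<forall>l\<in>Qstar. x (\<lambda>\<phi>. c * l \<phi>) = c * x l"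
    using assms unfolding Qhat_def by blast
  show ?thesis using bspec[OF spec[OF h, of 0] Qstar_zero] by simp
qed

lemma Qhat_add: "x \<in> Qhat \<Longrightarrow> l1 \<in> Qstar \<Longrightarrow> l2 \<in> Qstar \<Longrightarrow> x (\<lambda>\<phi>. l1 \<phi> + l2 \<phi>) = x l1 + x l2"
  unfolding Qhat_def by blast

lemma Qhat_cmult: "x \<in> Qhat \<Longrightarrow> l \<in> Qstar \<Longrightarrow> x (\<lambda>\<phi>. c * l \<phi>) = c * x l"
  unfolding Qhat_def by blast

lemma Qhat_sum: assumes x: "x \<in> Qhat" shows "finite J \<Longrightarrow> J \<subseteq> Qstar \<Longrightarrow> x (\<lambda>\<phi>. \<Sum>j\<in>J. t j * j \<phi>) = (\<Sum>j\<in>J. t j * x j)"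
proof (induction J rule: finite_induct)
  case empty then show ?case by (simp add: Qhat_zero x)
next
  case (insert i J)
  have "x (\<lambda>\<phi>. \<Sum>j\<in>insert i J. t j * j \<phi>) = x (\<lambda>\<phi>. t i * i \<phi> + (\<Sum>j\<in>J. t j * j \<phi>))"
    using insert by simp
  also have "\<dots> = x (\<lambda>\<phi>. t i * i \<phi>) + x (\<lambda>\<phi>. \<Sum>j\<in>J. t j * j \<phi>)"
    using insert x by (intro Qhat_add Qstar_cmult Qstar_sum) auto
  also have "\<dots> = t i * x i + (\<Sum>j\<in>J. t j * x j)"
    using insert x by (simp add: Qhat_cmult)
  finally show ?case using insert by simp
qed

lemma Qhat_subset: "Qhat \<subseteq> space (Pi\<^sub>M Qstar (\<lambda>_. borel))"
  by (auto simp: Qhat_def space_PiM PiE_def extensional_def)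

definition Qsets :: "(('q::real_normed_vector \<Rightarrow> real) \<Rightarrow> real) set set" where
  "Qsets = sets (restrict_space (Pi\<^sub>M Qstar (\<lambda>_. borel)) Qhat)"

lemma space_Qsets:
  assumes "sets m = (Qsets :: (('q::real_normed_vector \<Rightarrow> real) \<Rightarrow> real) set set)"
  shows "space m = Qhat"
proof -
  have "space m = space (restrict_space (Pi\<^sub>M Qstar (\<lambda>_. borel)) (Qhat :: (('q \<Rightarrow> real) \<Rightarrow> real) set))"
    using assms unfolding Qsets_def by (rule sets_eq_imp_space_eq)
  then show ?thesis using Qhat_subset by (auto simp: space_restrict_space)
qed

lemma Qhat_measure_unique:
  fixes m1 m2 :: "(('q::real_normed_vector \<Rightarrow> real) \<Rightarrow> real) measure"
  assumes s: "sets m1 = Qsets" "sets m2 = Qsets"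
    and fm: "finite_measure m1" "finite_measure m2"
    and ch: "\<And>L. L \<in> Qstar \<Longrightarrow> (\<integral>x. iexp (x L) \<partial>m1) = (\<integral>x. iexp (x L) \<partial>m2)"
  shows "m1 = m2"
proof -
  let ?P = "Pi\<^sub>M Qstar (\<lambda>_::('q \<Rightarrow> real). (borel :: real measure))"
  let ?E = "(\<lambda>A. A \<inter> Qhat) ` prod_algebra Qstar (\<lambda>_::('q \<Rightarrow> real). (borel :: real measure))"
  have sp1: "space m1 = Qhat" by (rule space_Qsets[OF s(1)])
  have sp2: "space m2 = Qhat" by (rule space_Qsets[OF s(2)])
  have QS: "Qsets = sigma_sets Qhat ?E"
  proof -
    have "Qsets = (\<lambda>A. A \<inter> Qhat) ` sets ?P"
      unfolding Qsets_def sets_restrict_space by (auto simp: Int_commute)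
    also have "\<dots> = (\<lambda>A. A \<inter> Qhat) ` sigma_sets (space ?P) (prod_algebra Qstar (\<lambda>_. borel))"
      by (simp add: sets_PiM space_PiM)
    also have "\<dots> = sigma_sets Qhat ?E"
      by (rule sigma_sets_trace[symmetric]) (use prod_algebra_sets_into_space[of Qstar "\<lambda>_. borel"] Qhat_subset in \<open>simp_all add: space_PiM\<close>)
    finally show ?thesis .
  qed
  show ?thesis
  proof (rule measure_eqI_generator_eq[where E="?E" and \<Omega>=Qhat and A="\<lambda>_. Qhat"])
    show "Int_stable ?E"
    proof (rule Int_stableI)
      fix a b assume "a \<in> ?E" "b \<in> ?E"
      then obtain A B where AB: "a = A \<inter> Qhat" "b = B \<inter> Qhat" "A \<in> prod_algebra Qstar (\<lambda>_. borel)"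
        "B \<in> prod_algebra Qstar (\<lambda>_. borel)" by auto
      then have "A \<inter> B \<in> prod_algebra Qstar (\<lambda>_. borel)"
        using Int_stable_prod_algebra unfolding Int_stable_def by blast
      moreover have "a \<inter> b = (A \<inter> B) \<inter> Qhat" using AB by auto
      ultimately show "a \<inter> b \<in> ?E" by blast
    qed
    show "?E \<subseteq> Pow Qhat" by auto
    show "sets m1 = sigma_sets Qhat ?E" "sets m2 = sigma_sets Qhat ?E" using s QS by auto
    show "range (\<lambda>_. Qhat) \<subseteq> ?E"
    proof -
      have "space ?P \<in> prod_algebra Qstar (\<lambda>_. borel)"
        using space_in_prod_algebra[of Qstar "\<lambda>_. borel"] by (simp add: space_PiM)
      moreover have "Qhat = space ?P \<inter> Qhat" using Qhat_subset by auto
      ultimately show ?thesis by blast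
    qed
    show "(\<Union>i::nat. Qhat) = Qhat" by simp
    show "emeasure m1 Qhat \<noteq> \<infinity>" for i::nat
      using finite_measure.emeasure_finite[OF fm(1)] by simp
    fix X assume "X \<in> ?E"
    then obtain A where A: "X = A \<inter> Qhat" "A \<in> prod_algebra Qstar (\<lambda>_. borel)" by auto
    then obtain J B where JB: "A = prod_emb Qstar (\<lambda>_. borel) J (\<Pi>\<^sub>E j\<in>J. B j)"
      "finite J" "J \<subseteq> Qstar" "\<And>i. i \<in> J \<Longrightarrow> B i \<in> sets borel"
      by (auto elim!: prod_algebraE)
    have X: "X = {x\<in>Qhat. \<forall>j\<in>J. x j \<in> B j}"
    proof -
      have "x \<in> Qstar \<rightarrow>\<^sub>E UNIV" if "x \<in> Qhat" for x
        using Qhat_subset that by (auto simp: space_PiM)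
      then show ?thesis using A(1) JB(1) by (auto simp: prod_emb_def)
    qed
    have meas: "(\<lambda>x. x j) \<in> borel_measurable m" if "sets m = Qsets" "j \<in> Qstar" for m :: "(('q \<Rightarrow> real) \<Rightarrow> real) measure" and j
    proof -
      have "(\<lambda>x. x j) \<in> borel_measurable (restrict_space ?P Qhat)"
        by (intro measurable_restrict_space1 measurable_component_singleton that)
      then show ?thesis unfolding measurable_cong_sets[OF that(1)[unfolded Qsets_def] refl] .
    qed
    have "emeasure m1 {x\<in>space m1. \<forall>j\<in>J. x j \<in> B j} = emeasure m2 {x\<in>space m2. \<forall>j\<in>J. x j \<in> B j}"
    proof (rule cyl_unique_aux[where f="\<lambda>j x. x j", OF JB(2) fm])
      show "sets m1 = sets m2" using s by simp
      show "\<forall>j\<in>J. (\<lambda>x. x j) \<in> borel_measurable m1" using meas s(1) JB(3) by blast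
      show "\<forall>j\<in>J. B j \<in> sets borel" using JB(4) by blast
      show "\<forall>t. (\<integral>x. iexp (\<Sum>j\<in>J. t j * x j) \<partial>m1) = (\<integral>x. iexp (\<Sum>j\<in>J. t j * x j) \<partial>m2)"
      proof
        fix t
        have r: "(\<integral>x. iexp (\<Sum>j\<in>J. t j * x j) \<partial>m) = (\<integral>x. iexp (x (\<lambda>\<phi>. \<Sum>j\<in>J. t j * j \<phi>)) \<partial>m)"
          if "space m = Qhat" for m :: "(('q \<Rightarrow> real) \<Rightarrow> real) measure"
          by (intro Bochner_Integration.integral_cong refl) (simp add: Qhat_sum JB(2,3) that)
        show "(\<integral>x. iexp (\<Sum>j\<in>J. t j * x j) \<partial>m1) = (\<integral>x. iexp (\<Sum>j\<in>J. t j * x j) \<partial>m2)"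
          unfolding r[OF sp1] r[OF sp2] by (rule ch) (rule Qstar_sum[OF JB(2,3)])
      qed
    qed
    then have "emeasure m1 {x\<in>Qhat. \<forall>j\<in>J. x j \<in> B j} = emeasure m2 {x\<in>Qhat. \<forall>j\<in>J. x j \<in> B j}"
      by (simp only: sp1 sp2)
    then show "emeasure m1 X = emeasure m2 X" by (simp only: X)
  qed
qed

lemma indep_from_char:
  fixes M :: "'x measure" and X Y :: "'x \<Rightarrow> real"
  assumes ps: "prob_space M"
    and Xm[measurable]: "X \<in> borel_measurable M" and Ym[measurable]: "Y \<in> borel_measurable M"
    and ch: "\<And>s t. (\<integral>x. iexp (s * X x + t * Y x) \<partial>M) = (\<integral>x. iexp (s * X x) \<partial>M) * (\<integral>x. iexp (t * Y x) \<partial>M)"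
  shows "prob_space.indep_var M borel X borel Y"
proof -
  interpret prob_space M by fact
  define P where "P = distr M borel X"
  define R where "R = distr M borel Y"
  define Jm where "Jm = distr M (borel \<Otimes>\<^sub>M borel) (\<lambda>x. (X x, Y x))"
  have pP: "prob_space P" unfolding P_def by (rule prob_space_distr) simp
  have pR: "prob_space R" unfolding R_def by (rule prob_space_distr) simp
  have pJ: "prob_space Jm" unfolding Jm_def by (rule prob_space_distr) simp
  interpret P: prob_space P by fact
  interpret R: prob_space R by fact
  interpret PR: pair_prob_space P R by standard
  have sP: "sets P = sets borel" and sR: "sets R = sets borel" by (simp_all add: P_def R_def)
  have pairsets: "sets (P \<Otimes>\<^sub>M R) = sets (borel \<Otimes>\<^sub>M borel)"
    by (intro sets_pair_measure_cong sP sR)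
  have spPR: "space (P \<Otimes>\<^sub>M R) = UNIV"
    using sets_eq_imp_space_eq[OF pairsets] by (simp add: space_pair_measure)
  have spJ: "space Jm = UNIV" by (simp add: Jm_def space_pair_measure)
  have cylthm: "emeasure Jm {p\<in>space Jm. \<forall>b\<in>UNIV. (if b then fst p else snd p) \<in> BB b} =
                emeasure (P \<Otimes>\<^sub>M R) {p\<in>space (P \<Otimes>\<^sub>M R). \<forall>b\<in>UNIV. (if b then fst p else snd p) \<in> BB b}"
    if BB: "\<And>b. BB b \<in> sets borel" for BB :: "bool \<Rightarrow> real set"
  proof (rule cyl_unique_aux[where f="\<lambda>b p. if b then fst p else snd p"])
    show "finite (UNIV :: bool set)" by simp
    show "finite_measure Jm" using pJ by (rule prob_space.finite_measure)
    show "finite_measure (P \<Otimes>\<^sub>M R)" using PR.prob_space_axioms by (rule prob_space.finite_measure)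
    show "sets Jm = sets (P \<Otimes>\<^sub>M R)" using pairsets by (simp add: Jm_def)
    show "\<forall>j\<in>UNIV. (\<lambda>p. if j then fst p else snd p) \<in> borel_measurable Jm"
      by (auto simp: Jm_def)
    show "\<forall>j\<in>UNIV. BB j \<in> sets borel" using BB by simp
    show "\<forall>t. (\<integral>p. iexp (\<Sum>j\<in>UNIV. t j * (if j then fst p else snd p)) \<partial>Jm) =
              (\<integral>p. iexp (\<Sum>j\<in>UNIV. t j * (if j then fst p else snd p)) \<partial>(P \<Otimes>\<^sub>M R))"
    proof
      fix t :: "bool \<Rightarrow> real"
      have sumb: "(\<Sum>j\<in>UNIV. t j * (if j then fst p else snd p)) = t True * fst p + t False * snd p" for p
        by (simp add: UNIV_bool)
      have "(\<integral>p. iexp (\<Sum>j\<in>UNIV. t j * (if j then fst p else snd p)) \<partial>Jm) =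
            (\<integral>x. iexp (t True * X x + t False * Y x) \<partial>M)"
        unfolding sumb Jm_def by (subst integral_distr) auto
      also have "\<dots> = (\<integral>x. iexp (t True * X x) \<partial>M) * (\<integral>x. iexp (t False * Y x) \<partial>M)" by (rule ch)
      also have "\<dots> = (\<integral>a. iexp (t True * a) \<partial>P) * (\<integral>b. iexp (t False * b) \<partial>R)"
        unfolding P_def R_def by (subst (1 2) integral_distr) auto
      also have "\<dots> = (\<integral>a. (\<integral>b. iexp (t True * a) * iexp (t False * b) \<partial>R) \<partial>P)"
        by simp
      also have "\<dots> = (\<integral>p. iexp (t True * fst p) * iexp (t False * snd p) \<partial>(P \<Otimes>\<^sub>M R))"
      proof (subst PR.integral_fst'[symmetric])
        show "integrable (P \<Otimes>\<^sub>M R) (\<lambda>p. iexp (t True * fst p) * iexp (t False * snd p))"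
        proof (rule PR.integrable_const_bound[where B=1])
          show "AE x in P \<Otimes>\<^sub>M R. norm (iexp (t True * fst x) * iexp (t False * snd x)) \<le> 1"
            by (simp add: norm_mult)
          have "(\<lambda>p. iexp (t True * fst p) * iexp (t False * snd p)) \<in> borel_measurable (borel \<Otimes>\<^sub>M borel)"
            by measurable
          then show "(\<lambda>p. iexp (t True * fst p) * iexp (t False * snd p)) \<in> borel_measurable (P \<Otimes>\<^sub>M R)"
            unfolding measurable_cong_sets[OF pairsets refl] .
        qed
      qed simp
      also have "\<dots> = (\<integral>p. iexp (\<Sum>j\<in>UNIV. t j * (if j then fst p else snd p)) \<partial>(P \<Otimes>\<^sub>M R))"
        unfolding sumb by (simp add: exp_add[symmetric] algebra_simps)
      finally show "(\<integral>p. iexp (\<Sum>j\<in>UNIV. t j * (if j then fst p else snd p)) \<partial>Jm) =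
              (\<integral>p. iexp (\<Sum>j\<in>UNIV. t j * (if j then fst p else snd p)) \<partial>(P \<Otimes>\<^sub>M R))" .
    qed
  qed
  have eqPR: "P \<Otimes>\<^sub>M R = Jm"
  proof (rule pair_measure_eqI)
    show "sigma_finite_measure P" "sigma_finite_measure R" by unfold_locales
    show "sets (P \<Otimes>\<^sub>M R) = sets Jm" using pairsets by (simp add: Jm_def)
    fix A B assume A: "A \<in> sets P" and B: "B \<in> sets R"
    define BB where "BB b = (if b then A else B)" for b
    have BBs: "BB b \<in> sets borel" for b using A B sP sR by (simp add: BB_def)
    have set: "{p\<in>UNIV. \<forall>b\<in>UNIV. (if b then fst p else snd p) \<in> BB b} = A \<times> B"
      by (auto simp: BB_def UNIV_bool)
    have "emeasure Jm (A \<times> B) = emeasure (P \<Otimes>\<^sub>M R) (A \<times> B)"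
    proof -
      have "emeasure Jm {p\<in>space Jm. \<forall>b\<in>UNIV. (if b then fst p else snd p) \<in> BB b} =
                emeasure (P \<Otimes>\<^sub>M R) {p\<in>space (P \<Otimes>\<^sub>M R). \<forall>b\<in>UNIV. (if b then fst p else snd p) \<in> BB b}"
        by (rule cylthm) (rule BBs)
      then show ?thesis unfolding spJ spPR set .
    qed
    also have "\<dots> = emeasure P A * emeasure R B"
      by (rule R.emeasure_pair_measure_Times[OF A B])
    finally show "emeasure P A * emeasure R B = emeasure Jm (A \<times> B)" by simp
  qed
  show ?thesis
    unfolding indep_var_distribution_eq using eqPR by (simp add: P_def R_def Jm_def)
qed

lemma onorm_le':
  fixes f :: "'a::real_normed_vector \<Rightarrow> 'b::real_normed_vector"
  assumes "\<And>x. norm (f x) \<le> b * norm x" "0 \<le> b"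
  shows "onorm f \<le> b"
  unfolding onorm_def
proof (rule cSUP_least)
  show "UNIV \<noteq> {}" by simp
  fix x
  show "norm (f x) / norm x \<le> b"
  proof (cases "x = 0")
    case True then show ?thesis using assms(2) by simp
  next
    case False
    then have "norm x > 0" by simp
    then show ?thesis using assms(1)[of x] by (simp add: divide_le_eq)
  qed
qed

lemma Qstar_bounded_linear:
  fixes l :: "'q::real_normed_vector \<Rightarrow> real"
  assumes "l \<in> Qstar"
  shows "bounded_linear l"
proof -
  have lin: "linear l" and cont: "continuous_on UNIV l" using assms by (auto simp: Qstar_def)
  have l0: "l 0 = 0" using lin by (rule linear_0)
  have "isCont l 0" using cont by (simp add: continuous_on_eq_continuous_at)
  then have "l \<midarrow>0\<rightarrow> l 0" by (simp add: isCont_def)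
  then obtain d where d: "d > 0" "\<And>x. x \<noteq> 0 \<Longrightarrow> norm x < d \<Longrightarrow> norm (l x - l 0) < 1"
    unfolding LIM_eq by (metis diff_zero zero_less_one)
  have bound: "norm (l x) \<le> norm x * (2 / d)" for x
  proof (cases "x = 0")
    case True then show ?thesis using l0 by simp
  next
    case False
    define c where "c = d / (2 * norm x)"
    have nx: "norm x > 0" using False by simp
    have c: "c > 0" using d nx by (simp add: c_def)
    have "norm (c *\<^sub>R x) = d / 2" using nx c d(1) by (simp add: c_def)
    then have "norm (l (c *\<^sub>R x)) < 1" using d(2)[of "c *\<^sub>R x"] d(1) c False l0 by simp
    moreover have "l (c *\<^sub>R x) = c * l x" using lin by (simp add: linear_scale)
    ultimately have "c * \<bar>l x\<bar> < 1" using c by (simp add: abs_mult)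
    then have "\<bar>l x\<bar> < 1 / c" using c by (simp add: field_simps)
    also have "1 / c = norm x * (2 / d)" using d nx by (simp add: c_def field_simps)
    finally show ?thesis by simp
  qed
  show ?thesis
    by (rule bounded_linear_intro[where K="2/d"]) (use lin bound in \<open>auto simp: linear_add linear_scale\<close>)
qed

lemma cs2: "a * b + c * e \<le> sqrt (a\<^sup>2 + c\<^sup>2) * sqrt (b\<^sup>2 + e\<^sup>2)" for a b c e :: real
proof -
  have "(a * b + c * e)\<^sup>2 \<le> (a\<^sup>2 + c\<^sup>2) * (b\<^sup>2 + e\<^sup>2)"
  proof -
    have "0 \<le> (a * e - c * b)\<^sup>2" by simp
    then show ?thesis by (simp add: power2_eq_square algebra_simps)
  qed
  then have "\<bar>a * b + c * e\<bar> \<le> sqrt ((a\<^sup>2 + c\<^sup>2) * (b\<^sup>2 + e\<^sup>2))"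
    using real_le_rsqrt by (metis real_sqrt_abs real_sqrt_le_mono)
  then show ?thesis by (simp add: real_sqrt_mult)
qed

lemma onorm_pyth:
  fixes K :: "'q::real_inner \<Rightarrow> real" and u :: 'q
  assumes K: "bounded_linear K" and u: "norm u = 1" and Ku: "K u = 0"
  shows "(onorm (\<lambda>\<phi>. K \<phi> + t * inner u \<phi>))\<^sup>2 = (onorm K)\<^sup>2 + t\<^sup>2"
proof -
  define F where "F = (\<lambda>\<phi>. K \<phi> + t * inner u \<phi>)"
  have blF: "bounded_linear F" unfolding F_def
    by (intro bounded_linear_add K bounded_linear_const_mult bounded_linear_inner_right)
  have Kw: "K (\<phi> - inner u \<phi> *\<^sub>R u) = K \<phi>" for \<phi>
    using Ku by (simp add: linear_diff[OF bounded_linear.linear[OF K]] linear_scale[OF bounded_linear.linear[OF K]])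
  have uu: "inner u u = 1" using u by (simp add: norm_eq_sqrt_inner)
  have orth: "inner u (\<phi> - inner u \<phi> *\<^sub>R u) = 0" for \<phi>
    using uu by (simp add: inner_diff_right)
  have pyth: "(norm (\<phi> - inner u \<phi> *\<^sub>R u))\<^sup>2 + (inner u \<phi>)\<^sup>2 = (norm \<phi>)\<^sup>2" for \<phi>
  proof -
    have "(norm (\<phi> - inner u \<phi> *\<^sub>R u))\<^sup>2 = inner (\<phi> - inner u \<phi> *\<^sub>R u) (\<phi> - inner u \<phi> *\<^sub>R u)"
      by (rule power2_norm_eq_inner)
    also have "\<dots> = inner \<phi> \<phi> - 2 * (inner u \<phi>)\<^sup>2 + (inner u \<phi>)\<^sup>2 * inner u u"
      by (simp add: inner_diff_left inner_diff_right inner_commute power2_eq_square algebra_simps)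
    finally have "(norm (\<phi> - inner u \<phi> *\<^sub>R u))\<^sup>2 = inner \<phi> \<phi> - 2 * (inner u \<phi>)\<^sup>2 + (inner u \<phi>)\<^sup>2 * inner u u" .
    then show ?thesis using uu by (simp add: power2_norm_eq_inner)
  qed
  have A0: "0 \<le> onorm K" using K by (rule onorm_pos_le)
  have upper: "onorm F \<le> sqrt ((onorm K)\<^sup>2 + t\<^sup>2)"
  proof (rule onorm_le')
    show "0 \<le> sqrt ((onorm K)\<^sup>2 + t\<^sup>2)" by simp
    fix \<phi>
    define w where "w = \<phi> - inner u \<phi> *\<^sub>R u"
    have "norm (F \<phi>) = \<bar>K w + t * inner u \<phi>\<bar>" by (simp add: F_def w_def Kw)
    also have "\<dots> \<le> \<bar>K w\<bar> + \<bar>t\<bar> * \<bar>inner u \<phi>\<bar>" by (simp add: abs_mult[symmetric] abs_triangle_ineq)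
    also have "\<dots> \<le> onorm K * norm w + \<bar>t\<bar> * \<bar>inner u \<phi>\<bar>"
      using onorm[OF K, of w] by simp
    also have "\<dots> \<le> sqrt ((onorm K)\<^sup>2 + \<bar>t\<bar>\<^sup>2) * sqrt ((norm w)\<^sup>2 + \<bar>inner u \<phi>\<bar>\<^sup>2)"
      by (rule cs2)
    also have "\<dots> = sqrt ((onorm K)\<^sup>2 + t\<^sup>2) * norm \<phi>"
      using pyth[of \<phi>] by (simp add: w_def)
    finally show "norm (F \<phi>) \<le> sqrt ((onorm K)\<^sup>2 + t\<^sup>2) * norm \<phi>" .
  qed
  have B0: "0 \<le> onorm F" using blF by (rule onorm_pos_le)
  have tF: "t\<^sup>2 \<le> (onorm F)\<^sup>2"
  proof -
    have "norm (F u) \<le> onorm F * norm u" using blF by (rule onorm)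
    then have "\<bar>t\<bar> \<le> onorm F" using Ku uu u by (simp add: F_def)
    then show ?thesis using B0 by (metis abs_le_square_iff abs_of_nonneg)
  qed
  have lowerK: "onorm K \<le> sqrt ((onorm F)\<^sup>2 - t\<^sup>2)"
  proof (rule onorm_le')
    show "0 \<le> sqrt ((onorm F)\<^sup>2 - t\<^sup>2)" using tF by simp
    fix w
    define w' where "w' = w - inner u w *\<^sub>R u"
    have Kw': "K w' = K w" by (simp add: w'_def Kw)
    have nw': "norm w' \<le> norm w"
    proof -
      have "(norm w')\<^sup>2 \<le> (norm w)\<^sup>2" using pyth[of w] zero_le_power2[of "inner u w"] unfolding w'_def by linarith
      then show ?thesis by (rule power2_le_imp_le) simp
    qed
    define S where "S = (K w')\<^sup>2 + t\<^sup>2 * (norm w')\<^sup>2"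
    define \<psi> where "\<psi> = K w' *\<^sub>R w' + (t * (norm w')\<^sup>2) *\<^sub>R u"
    have ou: "inner u w' = 0" by (simp add: w'_def orth)
    have F\<psi>: "F \<psi> = S"
    proof -
      have "K \<psi> = (K w')\<^sup>2"
        using Ku by (simp add: \<psi>_def linear_add[OF bounded_linear.linear[OF K]] linear_scale[OF bounded_linear.linear[OF K]] power2_eq_square)
      moreover have "inner u \<psi> = t * (norm w')\<^sup>2"
        using ou uu by (simp add: \<psi>_def inner_add_right)
      ultimately show ?thesis by (simp add: F_def S_def power2_eq_square)
    qed
    have n\<psi>: "(norm \<psi>)\<^sup>2 = (norm w')\<^sup>2 * S"
    proof -
      have "(norm \<psi>)\<^sup>2 = inner \<psi> \<psi>" by (simp add: power2_norm_eq_inner)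
      also have "\<dots> = (K w')\<^sup>2 * inner w' w' + (t * (norm w')\<^sup>2)\<^sup>2 * inner u u"
        using ou by (simp add: \<psi>_def inner_add_left inner_add_right inner_commute power2_eq_square algebra_simps)
      also have "\<dots> = (norm w')\<^sup>2 * S"
      proof -
        have "inner w' w' = (norm w')\<^sup>2" by (simp add: power2_norm_eq_inner)
        then show ?thesis using uu by (simp add: S_def power2_eq_square algebra_simps)
      qed
      finally show ?thesis .
    qed
    have S0: "0 \<le> S" by (simp add: S_def)
    have "S \<le> onorm F * norm \<psi>" using onorm[OF blF, of \<psi>] F\<psi> S0 by simp
    then have "S\<^sup>2 \<le> (onorm F)\<^sup>2 * (norm \<psi>)\<^sup>2"
      using S0 B0 by (metis power_mono power_mult_distrib)
    then have "S * S \<le> (onorm F)\<^sup>2 * (norm w')\<^sup>2 * S"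
      using n\<psi> by (simp add: power2_eq_square algebra_simps)
    then have SS: "S \<le> (onorm F)\<^sup>2 * (norm w')\<^sup>2"
    proof (cases "S = 0")
      case True then show ?thesis by simp
    next
      case False
      then have "S > 0" using S0 by simp
      then show ?thesis using \<open>S * S \<le> _\<close> by (simp add: mult_le_cancel_right)
    qed
    then have "(K w)\<^sup>2 \<le> ((onorm F)\<^sup>2 - t\<^sup>2) * (norm w')\<^sup>2"
      by (simp add: S_def Kw' algebra_simps)
    also have "\<dots> \<le> ((onorm F)\<^sup>2 - t\<^sup>2) * (norm w)\<^sup>2"
      using tF nw' by (intro mult_left_mono power_mono) auto
    also have "\<dots> = (sqrt ((onorm F)\<^sup>2 - t\<^sup>2) * norm w)\<^sup>2"
      using tF by (simp add: power_mult_distrib)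
    finally have h: "(K w)\<^sup>2 \<le> (sqrt ((onorm F)\<^sup>2 - t\<^sup>2) * norm w)\<^sup>2" .
    have "\<bar>K w\<bar> \<le> \<bar>sqrt ((onorm F)\<^sup>2 - t\<^sup>2) * norm w\<bar>"
      using h by (simp only: abs_le_square_iff)
    also have "\<dots> = sqrt ((onorm F)\<^sup>2 - t\<^sup>2) * norm w" using tF by simp
    finally show "norm (K w) \<le> sqrt ((onorm F)\<^sup>2 - t\<^sup>2) * norm w" by simp
  qed
  have "(onorm K)\<^sup>2 \<le> (onorm F)\<^sup>2 - t\<^sup>2"
    using lowerK A0 tF by (metis power_mono real_sqrt_pow2 diff_ge_0_iff_ge)
  moreover have "(onorm F)\<^sup>2 \<le> (onorm K)\<^sup>2 + t\<^sup>2"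
    using upper B0 by (metis power_mono real_sqrt_pow2 add_nonneg_nonneg zero_le_power2)
  ultimately show ?thesis unfolding F_def[symmetric] by linarith
qed

lemma std_normal_shift:
  "std_normal_density (b + z) * exp (b * (b + z)) = exp (b\<^sup>2 / 2) * std_normal_density z"
proof -
  have "exp (- (b + z)\<^sup>2 / 2) * exp (b * (b + z)) = exp (b\<^sup>2 / 2) * exp (- z\<^sup>2 / 2)"
    by (simp add: exp_add[symmetric] power2_eq_square field_simps)
  then show ?thesis by (simp add: std_normal_density_def)
qed

lemma std_normal_mgf:
  fixes \<alpha> \<beta> :: real
  shows "integrable std_normal_distribution (\<lambda>y. exp (\<beta>*y) *\<^sub>R iexp (\<alpha>*y))"
    and "(\<integral>y. exp (\<beta>*y) *\<^sub>R iexp (\<alpha>*y) \<partial>std_normal_distribution) = exp (\<beta>\<^sup>2/2 - \<alpha>\<^sup>2/2) *\<^sub>R iexp (\<alpha>*\<beta>)"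
proof -
  interpret real_distribution std_normal_distribution by (rule real_dist_normal_dist)
  define G where "G z = std_normal_density z *\<^sub>R iexp (\<alpha> * z)" for z
  define F where "F y = std_normal_density y *\<^sub>R (exp (\<beta>*y) *\<^sub>R iexp (\<alpha>*y))" for y
  have dens_nonneg: "AE x in lborel. 0 \<le> std_normal_density x" by (simp add: normal_density_nonneg)
  have iG: "integrable lborel G"
  proof -
    have "integrable std_normal_distribution (\<lambda>z. iexp (\<alpha> * z))"
      by (rule integrable_const_bound[where B=1]) auto
    then show ?thesis unfolding G_def
      by (subst (asm) integrable_density) (auto simp: normal_density_nonneg)
  qed
  have intG: "(\<integral>z. G z \<partial>lborel) = complex_of_real (exp (- \<alpha>\<^sup>2 / 2))"
  proof -
    have "(\<integral>z. G z \<partial>lborel) = char std_normal_distribution \<alpha>"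
      unfolding char_def G_def by (subst integral_density) (auto simp: normal_density_nonneg)
    then show ?thesis by (simp add: char_std_normal_distribution)
  qed
  have Fshift: "F (\<beta> + 1 * z) = (exp (\<beta>\<^sup>2/2) *\<^sub>R iexp (\<alpha>*\<beta>)) * G z" for z
  proof -
    have "iexp (\<alpha> * (\<beta> + z)) = iexp (\<alpha>*\<beta>) * iexp (\<alpha> * z)"
      by (simp add: exp_add[symmetric] algebra_simps)
    moreover have "std_normal_density (\<beta> + z) * exp (\<beta> * (\<beta> + z)) = exp (\<beta>\<^sup>2 / 2) * std_normal_density z"
      by (rule std_normal_shift)
    ultimately show ?thesis
      unfolding F_def G_def by (simp add: scaleR_conv_of_real algebra_simps flip: of_real_mult)
  qed
  have iF: "integrable lborel F"
  proof -
    have "integrable lborel (\<lambda>z. F (\<beta> + 1 * z))"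
      unfolding Fshift using iG by (rule integrable_mult_right)
    then show ?thesis using lborel_integrable_real_affine_iff[of 1 F \<beta>] by simp
  qed
  show int: "integrable std_normal_distribution (\<lambda>y. exp (\<beta>*y) *\<^sub>R iexp (\<alpha>*y))"
    using iF unfolding F_def
    by (subst integrable_density) (auto simp: normal_density_nonneg)
  have "(\<integral>y. exp (\<beta>*y) *\<^sub>R iexp (\<alpha>*y) \<partial>std_normal_distribution) = (\<integral>y. F y \<partial>lborel)"
    unfolding F_def by (subst integral_density) (auto simp: normal_density_nonneg)
  also have "\<dots> = (\<integral>z. F (\<beta> + 1 * z) \<partial>lborel)"
    using lborel_integral_real_affine[of 1 F \<beta>] by simp
  also have "\<dots> = (exp (\<beta>\<^sup>2/2) *\<^sub>R iexp (\<alpha>*\<beta>)) * (\<integral>z. G z \<partial>lborel)"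
    unfolding Fshift by simp
  also have "\<dots> = exp (\<beta>\<^sup>2/2 - \<alpha>\<^sup>2/2) *\<^sub>R iexp (\<alpha>*\<beta>)"
  proof -
    have e: "exp (\<beta>\<^sup>2/2) * exp (- \<alpha>\<^sup>2 / 2) = exp (\<beta>\<^sup>2/2 - \<alpha>\<^sup>2/2)"
      by (simp add: exp_add[symmetric])
    have "(exp (\<beta>\<^sup>2/2) *\<^sub>R iexp (\<alpha>*\<beta>)) * complex_of_real (exp (- \<alpha>\<^sup>2 / 2)) =
          (exp (\<beta>\<^sup>2/2) * exp (- \<alpha>\<^sup>2 / 2)) *\<^sub>R iexp (\<alpha>*\<beta>)"
      by (simp add: scaleR_conv_of_real algebra_simps)
    then show ?thesis unfolding intG e .
  qed
  finally show "(\<integral>y. exp (\<beta>*y) *\<^sub>R iexp (\<alpha>*y) \<partial>std_normal_distribution) = exp (\<beta>\<^sup>2/2 - \<alpha>\<^sup>2/2) *\<^sub>R iexp (\<alpha>*\<beta>)" .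
qed

lemma gq_facts:
  assumes "gaussian_Qhat nu"
  shows "prob_space nu" "space nu = Qhat" "sets nu = Qsets"
    "\<And>l. l \<in> Qstar \<Longrightarrow> (\<integral>x. iexp (x l) \<partial>nu) = complex_of_real (exp (- (onorm l)\<^sup>2 / 4))"
  using assms by (auto simp: gaussian_Qhat_def Qsets_def)

lemma Qsets_meas:
  fixes m :: "(('q::real_normed_vector \<Rightarrow> real) \<Rightarrow> real) measure"
  assumes "sets m = Qsets"
  shows "(\<lambda>x. x j) \<in> borel_measurable m"
proof (cases "j \<in> Qstar")
  case True
  have "(\<lambda>x. x j) \<in> borel_measurable (restrict_space (Pi\<^sub>M Qstar (\<lambda>_. borel)) (Qhat :: (('q \<Rightarrow> real) \<Rightarrow> real) set))"
    by (intro measurable_restrict_space1 measurable_component_singleton True)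
  then show ?thesis unfolding measurable_cong_sets[OF assms[unfolded Qsets_def] refl] .
next
  case False
  have sp: "space m = Qhat" using assms by (rule space_Qsets)
  have "(\<lambda>x. undefined) \<in> borel_measurable m" by simp
  moreover have "x j = undefined" if "x \<in> space m" for x
    using that False sp by (auto simp: Qhat_def extensional_def)
  ultimately show ?thesis by (metis (mono_tags, lifting) measurable_cong)
qed

lemma Qhat_lin2:
  assumes x: "x \<in> Qhat" and l: "l1 \<in> Qstar" "l2 \<in> Qstar"
  shows "x (\<lambda>\<phi>. a * l1 \<phi> + b * l2 \<phi>) = a * x l1 + b * x l2"
proof -
  have "x (\<lambda>\<phi>. a * l1 \<phi> + b * l2 \<phi>) = x (\<lambda>\<phi>. a * l1 \<phi>) + x (\<lambda>\<phi>. b * l2 \<phi>)"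
    by (rule Qhat_add[OF x Qstar_cmult[OF l(1)] Qstar_cmult[OF l(2)]])
  also have "\<dots> = a * x l1 + b * x l2"
    using Qhat_cmult[OF x l(1)] Qhat_cmult[OF x l(2)] by simp
  finally show ?thesis .
qed

lemma inner_Qstar: "(\<lambda>\<phi>. inner u \<phi>) \<in> Qstar"
  by (auto simp: Qstar_def intro!: linearI continuous_intros simp: inner_add_right)

lemma onorm_inner_unit:
  fixes u :: "'q::real_inner"
  assumes "norm u = 1"
  shows "(onorm (\<lambda>\<phi>. t * inner u \<phi>))\<^sup>2 = t\<^sup>2"
  using onorm_pyth[of "\<lambda>_. 0" u t] assms by (simp add: onorm_zero)

lemma std_normal_part:
  fixes nu :: "(('q::real_inner \<Rightarrow> real) \<Rightarrow> real) measure" and u :: 'q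
  assumes g: "gaussian_Qhat nu" and u: "norm u = 1"
  shows "distr nu borel (\<lambda>x. sqrt 2 * x (\<lambda>\<phi>. inner u \<phi>)) = std_normal_distribution"
proof -
  note gf = gq_facts[OF g]
  interpret prob_space nu by (rule gf(1))
  let ?e = "\<lambda>\<phi>. inner u \<phi>"
  have me[measurable]: "(\<lambda>x. x ?e) \<in> borel_measurable nu" by (rule Qsets_meas[OF gf(3)])
  have rd: "real_distribution (distr nu borel (\<lambda>x. sqrt 2 * x ?e))"
    by (simp add: real_distribution_def real_distribution_axioms_def prob_space_distr)
  show ?thesis
  proof (rule Levy_uniqueness[OF rd real_dist_normal_dist])
    show "char (distr nu borel (\<lambda>x. sqrt 2 * x ?e)) = char std_normal_distribution"
    proof
      fix t
      have "char (distr nu borel (\<lambda>x. sqrt 2 * x ?e)) t = (\<integral>x. iexp (t * (sqrt 2 * x ?e)) \<partial>nu)"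
        unfolding char_def by (subst integral_distr) auto
      also have "\<dots> = (\<integral>x. iexp (x (\<lambda>\<phi>. (t * sqrt 2) * ?e \<phi>)) \<partial>nu)"
      proof (intro Bochner_Integration.integral_cong refl)
        fix x assume "x \<in> space nu"
        then have x: "x \<in> Qhat" using gf(2) by simp
        have "x (\<lambda>\<phi>. (t * sqrt 2) * ?e \<phi>) = (t * sqrt 2) * x ?e" by (rule Qhat_cmult[OF x inner_Qstar])
        then show "iexp (t * (sqrt 2 * x ?e)) = iexp (x (\<lambda>\<phi>. (t * sqrt 2) * ?e \<phi>))"
          by (simp only: mult.assoc)
      qed
      also have "\<dots> = complex_of_real (exp (- (onorm (\<lambda>\<phi>. (t * sqrt 2) * ?e \<phi>))\<^sup>2 / 4))"
        by (rule gf(4)) (rule Qstar_cmult[OF inner_Qstar])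
      also have "\<dots> = complex_of_real (exp (- (t\<^sup>2) / 2))"
        unfolding onorm_inner_unit[OF u] by (simp add: power_mult_distrib)
      also have "\<dots> = char std_normal_distribution t" by (simp add: char_std_normal_distribution)
      finally show "char (distr nu borel (\<lambda>x. sqrt 2 * x ?e)) t = char std_normal_distribution t" .
    qed
  qed
qed

lemma indep_part:
  fixes nu :: "(('q::real_inner \<Rightarrow> real) \<Rightarrow> real) measure" and u :: 'q
  assumes g: "gaussian_Qhat nu" and u: "norm u = 1" and K: "K \<in> Qstar" and Ku: "K u = 0"
  shows "prob_space.indep_var nu borel (\<lambda>x. x K) borel (\<lambda>x. x (\<lambda>\<phi>. inner u \<phi>))"
proof -
  note gf = gq_facts[OF g]
  let ?e = "\<lambda>\<phi>. inner u \<phi>"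
  have blK: "bounded_linear K" using K by (rule Qstar_bounded_linear)
  show ?thesis
  proof (rule indep_from_char[OF gf(1) Qsets_meas[OF gf(3)] Qsets_meas[OF gf(3)]])
    fix s t
    have on1: "(onorm (\<lambda>\<phi>. s * K \<phi> + t * ?e \<phi>))\<^sup>2 = s\<^sup>2 * (onorm K)\<^sup>2 + t\<^sup>2"
    proof -
      have bl: "bounded_linear (\<lambda>\<phi>. s * K \<phi>)" by (intro bounded_linear_const_mult blK)
      have "(onorm (\<lambda>\<phi>. s * K \<phi> + t * ?e \<phi>))\<^sup>2 = (onorm (\<lambda>\<phi>. s * K \<phi>))\<^sup>2 + t\<^sup>2"
        using onorm_pyth[OF bl u, of t] Ku by simp
      moreover have "onorm (\<lambda>\<phi>. s * K \<phi>) = \<bar>s\<bar> * onorm K"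
        using onorm_scaleR[OF blK, of s] by simp
      ultimately show ?thesis by (simp add: power_mult_distrib)
    qed
    have on2: "(onorm (\<lambda>\<phi>. s * K \<phi>))\<^sup>2 = s\<^sup>2 * (onorm K)\<^sup>2"
      using onorm_scaleR[OF blK, of s] by (simp add: power_mult_distrib)
    have "(\<integral>x. iexp (s * x K + t * x ?e) \<partial>nu) = (\<integral>x. iexp (x (\<lambda>\<phi>. s * K \<phi> + t * ?e \<phi>)) \<partial>nu)"
    proof (intro Bochner_Integration.integral_cong refl)
      fix x assume "x \<in> space nu"
      then have x: "x \<in> Qhat" using gf(2) by simp
      show "iexp (s * x K + t * x ?e) = iexp (x (\<lambda>\<phi>. s * K \<phi> + t * ?e \<phi>))"
        by (simp only: Qhat_lin2[OF x K inner_Qstar])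
    qed
    also have "\<dots> = complex_of_real (exp (- (s\<^sup>2 * (onorm K)\<^sup>2 + t\<^sup>2) / 4))"
      unfolding on1[symmetric] by (rule gf(4)) (intro Qstar_add Qstar_cmult K inner_Qstar)
    also have "\<dots> = complex_of_real (exp (- (s\<^sup>2 * (onorm K)\<^sup>2) / 4)) * complex_of_real (exp (- t\<^sup>2 / 4))"
      by (simp add: exp_add[symmetric] add_divide_distrib flip: of_real_mult)
    also have "\<dots> = (\<integral>x. iexp (s * x K) \<partial>nu) * (\<integral>x. iexp (t * x ?e) \<partial>nu)"
    proof -
      have a: "(\<integral>x. iexp (s * x K) \<partial>nu) = complex_of_real (exp (- (s\<^sup>2 * (onorm K)\<^sup>2) / 4))"
      proof -
        have "(\<integral>x. iexp (s * x K) \<partial>nu) = (\<integral>x. iexp (x (\<lambda>\<phi>. s * K \<phi>)) \<partial>nu)"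
        proof (intro Bochner_Integration.integral_cong refl)
          fix x assume "x \<in> space nu"
          then have x: "x \<in> Qhat" using gf(2) by simp
          show "iexp (s * x K) = iexp (x (\<lambda>\<phi>. s * K \<phi>))" by (simp only: Qhat_cmult[OF x K])
        qed
        also have "\<dots> = complex_of_real (exp (- (s\<^sup>2 * (onorm K)\<^sup>2) / 4))"
          unfolding on2[symmetric] by (rule gf(4)) (intro Qstar_cmult K)
        finally show ?thesis .
      qed
      have b: "(\<integral>x. iexp (t * x ?e) \<partial>nu) = complex_of_real (exp (- t\<^sup>2 / 4))"
      proof -
        have "(\<integral>x. iexp (t * x ?e) \<partial>nu) = (\<integral>x. iexp (x (\<lambda>\<phi>. t * ?e \<phi>)) \<partial>nu)"
        proof (intro Bochner_Integration.integral_cong refl)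
          fix x assume "x \<in> space nu"
          then have x: "x \<in> Qhat" using gf(2) by simp
          show "iexp (t * x ?e) = iexp (x (\<lambda>\<phi>. t * ?e \<phi>))" by (simp only: Qhat_cmult[OF x inner_Qstar])
        qed
        also have "\<dots> = complex_of_real (exp (- t\<^sup>2 / 4))"
          unfolding onorm_inner_unit[OF u, of t, symmetric] by (rule gf(4)) (intro Qstar_cmult inner_Qstar)
        finally show ?thesis .
      qed
      show ?thesis unfolding a b ..
    qed
    finally show "(\<integral>x. iexp (s * x K + t * x ?e) \<partial>nu) = (\<integral>x. iexp (s * x K) \<partial>nu) * (\<integral>x. iexp (t * x ?e) \<partial>nu)" .
  qed
qed

lemma shift_char:
  fixes nu :: "(('q::real_inner \<Rightarrow> real) \<Rightarrow> real) measure" and v :: 'q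
  assumes g: "gaussian_Qhat nu" and v0: "v \<noteq> 0" and L: "L \<in> Qstar"
  shows "integrable nu (\<lambda>x. exp (- (norm v)\<^sup>2 - 2 * x (\<lambda>\<phi>. inner v \<phi>)) *\<^sub>R iexp (x L + L v))"
    and "(\<integral>x. exp (- (norm v)\<^sup>2 - 2 * x (\<lambda>\<phi>. inner v \<phi>)) *\<^sub>R iexp (x L + L v) \<partial>nu)
          = complex_of_real (exp (- (onorm L)\<^sup>2 / 4))"
proof -
  note gf = gq_facts[OF g]
  interpret prob_space nu by (rule gf(1))
  define nv where "nv = norm v"
  have nv: "nv > 0" using v0 by (simp add: nv_def)
  define u where "u = v /\<^sub>R nv"
  have u: "norm u = 1" using nv by (simp add: u_def nv_def)
  have vu: "v = nv *\<^sub>R u" using nv by (simp add: u_def)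
  let ?e = "\<lambda>\<phi>. inner u \<phi>"
  have e: "?e \<in> Qstar" by (rule inner_Qstar)
  define c where "c = L u"
  define K where "K = (\<lambda>\<phi>. L \<phi> + (- c) * inner u \<phi>)"
  have KQ: "K \<in> Qstar" unfolding K_def by (intro Qstar_add Qstar_cmult L e)
  have blL: "bounded_linear L" using L by (rule Qstar_bounded_linear)
  have blK: "bounded_linear K" using KQ by (rule Qstar_bounded_linear)
  have uu: "inner u u = 1" using u by (simp add: norm_eq_sqrt_inner)
  have Ku: "K u = 0" using uu by (simp add: K_def c_def)
  have Leq: "L = (\<lambda>\<phi>. 1 * K \<phi> + c * ?e \<phi>)" by (simp add: K_def)
  have onL: "(onorm L)\<^sup>2 = (onorm K)\<^sup>2 + c\<^sup>2"
    using onorm_pyth[OF blK u Ku, of c] by (simp add: K_def)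
  have Lv: "L v = nv * c"
    unfolding vu c_def using linear_scale[OF bounded_linear.linear[OF blL]] by simp
  have xL: "x L = x K + c * x ?e" if "x \<in> Qhat" for x
    using Qhat_lin2[OF that KQ e, of 1 c] Leq by simp
  have xv: "x (\<lambda>\<phi>. inner v \<phi>) = nv * x ?e" if "x \<in> Qhat" for x
  proof -
    have "(\<lambda>\<phi>. inner v \<phi>) = (\<lambda>\<phi>. nv * ?e \<phi>)" by (simp add: vu)
    then show ?thesis using Qhat_cmult[OF that e, of nv] by simp
  qed
  define \<alpha> where "\<alpha> = c / sqrt 2"
  define \<beta> where "\<beta> = - sqrt 2 * nv"
  define C where "C = exp (- nv\<^sup>2) *\<^sub>R iexp (nv * c)"
  define Hs where "Hs y = C * (exp (\<beta> * y) *\<^sub>R iexp (\<alpha> * y))" for y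
  have mK[measurable]: "(\<lambda>x. x K) \<in> borel_measurable nu" by (rule Qsets_meas[OF gf(3)])
  have me[measurable]: "(\<lambda>x. x ?e) \<in> borel_measurable nu" by (rule Qsets_meas[OF gf(3)])
  have mHs[measurable]: "Hs \<in> borel_measurable borel" unfolding Hs_def by measurable
  have pw: "exp (- (norm v)\<^sup>2 - 2 * x (\<lambda>\<phi>. inner v \<phi>)) *\<^sub>R iexp (x L + L v) = iexp (x K) * Hs (sqrt 2 * x ?e)"
    if x: "x \<in> Qhat" for x
  proof -
    define X where "X = x ?e"
    have s2: "\<beta> * (sqrt 2 * X) = - 2 * nv * X" by (simp add: \<beta>_def)
    have s3: "\<alpha> * (sqrt 2 * X) = c * X" by (simp add: \<alpha>_def)
    have "Hs (sqrt 2 * X) = (exp (- nv\<^sup>2) * exp (- 2 * nv * X)) *\<^sub>R (iexp (nv * c) * iexp (c * X))"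
      unfolding Hs_def C_def s2 s3 by (simp add: scaleR_conv_of_real algebra_simps)
    also have "\<dots> = exp (- nv\<^sup>2 - 2 * nv * X) *\<^sub>R iexp (c * X + nv * c)"
      by (simp add: exp_add[symmetric] exp_diff algebra_simps)
    finally have H: "Hs (sqrt 2 * X) = exp (- nv\<^sup>2 - 2 * nv * X) *\<^sub>R iexp (c * X + nv * c)" .
    have "exp (- (norm v)\<^sup>2 - 2 * x (\<lambda>\<phi>. inner v \<phi>)) *\<^sub>R iexp (x L + L v) =
          exp (- nv\<^sup>2 - 2 * nv * X) *\<^sub>R iexp (x K + (c * X + nv * c))"
      unfolding xL[OF x] xv[OF x] Lv X_def nv_def by (simp add: algebra_simps)
    also have "\<dots> = iexp (x K) * (exp (- nv\<^sup>2 - 2 * nv * X) *\<^sub>R iexp (c * X + nv * c))"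
      by (simp add: exp_add[symmetric] algebra_simps)
    finally show ?thesis using H unfolding X_def by (simp only:)
  qed
  have ind: "indep_var borel (iexp \<circ> (\<lambda>x. x K)) borel ((\<lambda>b. Hs (sqrt 2 * b)) \<circ> (\<lambda>x. x ?e))"
    by (rule indep_var_compose[OF indep_part[OF g u KQ Ku]]) auto
  have std: "distr nu borel (\<lambda>x. sqrt 2 * x ?e) = std_normal_distribution"
    by (rule std_normal_part[OF g u])
  have iHs: "integrable nu (\<lambda>x. Hs (sqrt 2 * x ?e))"
  proof -
    have "integrable std_normal_distribution Hs"
      unfolding Hs_def by (intro integrable_mult_right std_normal_mgf(1))
    then have "integrable (distr nu borel (\<lambda>x. sqrt 2 * x ?e)) Hs" by (simp only: std)
    then show ?thesis by (subst (asm) integrable_distr_eq) auto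
  qed
  have intHs: "(\<integral>x. Hs (sqrt 2 * x ?e) \<partial>nu) = complex_of_real (exp (- c\<^sup>2 / 4))"
  proof -
    have "(\<integral>x. Hs (sqrt 2 * x ?e) \<partial>nu) = (\<integral>y. Hs y \<partial>distr nu borel (\<lambda>x. sqrt 2 * x ?e))"
      by (subst integral_distr) auto
    also have "\<dots> = (\<integral>y. Hs y \<partial>std_normal_distribution)" by (simp only: std)
    also have "\<dots> = C * (\<integral>y. exp (\<beta> * y) *\<^sub>R iexp (\<alpha> * y) \<partial>std_normal_distribution)"
      unfolding Hs_def by (rule integral_mult_right_zero)
    also have "\<dots> = C * (exp (\<beta>\<^sup>2/2 - \<alpha>\<^sup>2/2) *\<^sub>R iexp (\<alpha>*\<beta>))"
      by (simp only: std_normal_mgf(2))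
    also have "\<dots> = complex_of_real (exp (- c\<^sup>2 / 4))"
    proof -
      have ab: "\<alpha> * \<beta> = - (nv * c)" by (simp add: \<alpha>_def \<beta>_def)
      have b2: "\<beta>\<^sup>2/2 - \<alpha>\<^sup>2/2 = nv\<^sup>2 - c\<^sup>2/4" by (simp add: \<alpha>_def \<beta>_def power_mult_distrib power_divide)
      have "C * (exp (\<beta>\<^sup>2/2 - \<alpha>\<^sup>2/2) *\<^sub>R iexp (\<alpha>*\<beta>)) =
            (exp (- nv\<^sup>2) * exp (nv\<^sup>2 - c\<^sup>2/4)) *\<^sub>R (iexp (nv * c) * iexp (- (nv * c)))"
        unfolding C_def ab b2 by (simp add: scaleR_conv_of_real algebra_simps)
      also have "\<dots> = complex_of_real (exp (- c\<^sup>2 / 4))"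
        by (simp add: exp_add[symmetric] scaleR_conv_of_real)
      finally show ?thesis .
    qed
    finally show ?thesis .
  qed
  have iK: "integrable nu (\<lambda>x. iexp (x K))"
    by (rule integrable_const_bound[where B=1]) auto
  have intK: "(\<integral>x. iexp (x K) \<partial>nu) = complex_of_real (exp (- (onorm K)\<^sup>2 / 4))"
    by (rule gf(4)[OF KQ])
  have prodint: "integrable nu (\<lambda>x. iexp (x K) * Hs (sqrt 2 * x ?e))"
    and prodeq: "(\<integral>x. iexp (x K) * Hs (sqrt 2 * x ?e) \<partial>nu) = (\<integral>x. iexp (x K) \<partial>nu) * (\<integral>x. Hs (sqrt 2 * x ?e) \<partial>nu)"
    using indep_var_integrable[OF ind] indep_var_lebesgue_integral[OF ind] iK iHs by (simp_all add: comp_def)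
  have cong: "(\<integral>x. exp (- (norm v)\<^sup>2 - 2 * x (\<lambda>\<phi>. inner v \<phi>)) *\<^sub>R iexp (x L + L v) \<partial>nu) =
              (\<integral>x. iexp (x K) * Hs (sqrt 2 * x ?e) \<partial>nu)"
    by (intro Bochner_Integration.integral_cong refl pw) (simp add: gf(2))
  show "integrable nu (\<lambda>x. exp (- (norm v)\<^sup>2 - 2 * x (\<lambda>\<phi>. inner v \<phi>)) *\<^sub>R iexp (x L + L v))"
  proof (rule Bochner_Integration.integrable_cong[THEN iffD2, OF refl _ prodint])
    fix x assume "x \<in> space nu"
    then show "exp (- (norm v)\<^sup>2 - 2 * x (\<lambda>\<phi>. inner v \<phi>)) *\<^sub>R iexp (x L + L v) = iexp (x K) * Hs (sqrt 2 * x ?e)"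
      using gf(2) by (intro pw) simp
  qed
  show "(\<integral>x. exp (- (norm v)\<^sup>2 - 2 * x (\<lambda>\<phi>. inner v \<phi>)) *\<^sub>R iexp (x L + L v) \<partial>nu)
          = complex_of_real (exp (- (onorm L)\<^sup>2 / 4))"
    unfolding cong prodeq intK intHs onL
    by (simp add: exp_add[symmetric] add_divide_distrib flip: of_real_mult)
qed

lemma hat_shift_Qhat:
  fixes c :: "'q::real_normed_vector"
  assumes x: "x \<in> Qhat" shows "hat_shift c x \<in> Qhat"
proof -
  have add: "x (\<lambda>\<phi>. l1 \<phi> + l2 \<phi>) = x l1 + x l2" if "l1 \<in> Qstar" "l2 \<in> Qstar" for l1 l2
    using Qhat_add[OF x that] .
  have cm: "x (\<lambda>\<phi>. a * l \<phi>) = a * x l" if "l \<in> Qstar" for a l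
    using Qhat_cmult[OF x that] .
  show ?thesis
    unfolding Qhat_def hat_shift_def
    using add cm by (auto simp: algebra_simps Qstar_add Qstar_cmult)
qed

lemma hat_shift_apply: "L \<in> Qstar \<Longrightarrow> hat_shift c x L = x L + L c"
  by (simp add: hat_shift_def)

lemma hat_shift_inv:
  fixes c :: "'q::real_normed_vector"
  assumes x: "x \<in> Qhat" shows "hat_shift (-c) (hat_shift c x) = x"
proof
  fix l
  show "hat_shift (-c) (hat_shift c x) l = x l"
  proof (cases "l \<in> Qstar")
    case True
    then have "l (-c) = - l c" by (auto simp: Qstar_def linear_neg)
    then show ?thesis using True by (simp add: hat_shift_def)
  next
    case False
    then show ?thesis using x by (auto simp: hat_shift_def Qhat_def extensional_def)
  qed
qed

lemma hat_shift_zero: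
  assumes x: "x \<in> Qhat" shows "hat_shift 0 x = x"
proof
  fix l show "hat_shift 0 x l = x l"
    using x by (cases "l \<in> Qstar") (auto simp: hat_shift_def Qhat_def extensional_def Qstar_def linear_0)
qed

lemma hat_shift_meas:
  fixes m :: "(('q::real_normed_vector \<Rightarrow> real) \<Rightarrow> real) measure"
  assumes s: "sets m = Qsets"
  shows "hat_shift c \<in> measurable m m"
proof -
  have sp: "space m = Qhat" using s by (rule space_Qsets)
  have eq: "hat_shift c = (\<lambda>\<omega> i. (\<lambda>l \<omega>. if l \<in> Qstar then \<omega> l + l c else undefined) i \<omega>)"
    by (auto simp: hat_shift_def restrict_def)
  have "hat_shift c \<in> measurable m (Pi\<^sub>M Qstar (\<lambda>_. borel))"
    unfolding eq
  proof (rule measurable_PiM_single')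
    fix i :: "'q \<Rightarrow> real" assume i: "i \<in> Qstar"
    have "(\<lambda>\<omega>. \<omega> i + i c) \<in> borel_measurable m"
      using Qsets_meas[OF s, of i] by measurable
    then show "(\<lambda>\<omega>. if i \<in> Qstar then \<omega> i + i c else undefined) \<in> borel_measurable m"
      using i by simp
  qed (auto simp: PiE_def extensional_def)
  then have "hat_shift c \<in> measurable m (restrict_space (Pi\<^sub>M Qstar (\<lambda>_. borel)) Qhat)"
    by (rule measurable_restrict_space2[rotated]) (auto simp: sp hat_shift_Qhat)
  then show ?thesis unfolding measurable_cong_sets[OF refl s[unfolded Qsets_def]] .
qed

definition rho :: "'q::real_inner \<Rightarrow> (('q \<Rightarrow> real) \<Rightarrow> real) \<Rightarrow> real" where
  "rho v x = exp (- (norm v)\<^sup>2 - 2 * x (\<lambda>\<phi>. inner v \<phi>))"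

lemma rho_meas:
  fixes m :: "(('q::real_inner \<Rightarrow> real) \<Rightarrow> real) measure"
  assumes "sets m = Qsets" shows "rho v \<in> borel_measurable m"
  unfolding rho_def using Qsets_meas[OF assms, of "\<lambda>\<phi>. inner v \<phi>"] by measurable

lemma shift_measure:
  fixes nu :: "(('q::{real_inner, complete_space} \<Rightarrow> real) \<Rightarrow> real) measure"
  assumes g: "gaussian_Qhat nu"
  shows "distr (density nu (\<lambda>x. ennreal (rho v x))) nu (hat_shift v) = nu"
proof (cases "v = 0")
  case True
  note gf = gq_facts[OF g]
  have r1: "rho v x = 1" if "x \<in> space nu" for x
  proof -
    have "x (\<lambda>\<phi>. inner v \<phi>) = 0" using True that gf(2) Qhat_zero by simp
    then show ?thesis using True by (simp add: rho_def)
  qed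
  have "density nu (\<lambda>x. ennreal (rho v x)) = density nu (\<lambda>_. 1)"
    by (rule density_cong) (auto simp: r1 rho_meas[OF gf(3)])
  also have "\<dots> = nu" by (rule density_1)
  finally have d: "density nu (\<lambda>x. ennreal (rho v x)) = nu" .
  have "distr nu nu (hat_shift v) = distr nu nu (\<lambda>x. x)"
    by (rule distr_cong) (auto simp: True gf(2) hat_shift_zero)
  also have "\<dots> = nu" by (rule distr_id)
  finally show ?thesis unfolding d .
next
  case False
  note gf = gq_facts[OF g]
  interpret prob_space nu by (rule gf(1))
  have mr[measurable]: "rho v \<in> borel_measurable nu" by (rule rho_meas[OF gf(3)])
  have rpos: "0 \<le> rho v x" for x by (simp add: rho_def)
  have mh[measurable]: "hat_shift v \<in> measurable nu nu" by (rule hat_shift_meas[OF gf(3)])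
  have irho: "integrable nu (rho v)"
  proof -
    have "integrable nu (\<lambda>x. exp (- (norm v)\<^sup>2 - 2 * x (\<lambda>\<phi>. inner v \<phi>)) *\<^sub>R iexp (x (\<lambda>\<phi>. 0) + 0))"
      using shift_char(1)[OF g False Qstar_zero] by simp
    then have "integrable nu (\<lambda>x. norm (exp (- (norm v)\<^sup>2 - 2 * x (\<lambda>\<phi>. inner v \<phi>)) *\<^sub>R iexp (x (\<lambda>\<phi>. 0) + 0)))"
      by (rule integrable_norm)
    then show ?thesis by (simp add: rho_def[abs_def])
  qed
  define D where "D = density nu (\<lambda>x. ennreal (rho v x))"
  have fD: "finite_measure D"
  proof (rule finite_measureI)
    have "emeasure D (space D) = (\<integral>\<^sup>+x. ennreal (rho v x) \<partial>nu)"
      unfolding D_def by (simp add: emeasure_density nn_integral_set_ennreal[symmetric])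
    also have "\<dots> = ennreal (\<integral>x. rho v x \<partial>nu)"
      using irho rpos by (intro nn_integral_eq_integral) auto
    finally show "emeasure D (space D) \<noteq> \<infinity>" by simp
  qed
  have sD: "sets D = sets nu" by (simp add: D_def)
  show ?thesis unfolding D_def[symmetric]
  proof (rule Qhat_measure_unique)
    show "sets (distr D nu (hat_shift v)) = Qsets" "sets nu = Qsets" using gf(3) by simp_all
    show "finite_measure (distr D nu (hat_shift v))"
      by (rule finite_measure.finite_measure_distr[OF fD]) (simp add: measurable_cong_sets[OF sD refl])
    show "finite_measure nu" by unfold_locales
    fix L :: "'q \<Rightarrow> real" assume L: "L \<in> Qstar"
    have mL: "(\<lambda>x. iexp (x L)) \<in> borel_measurable nu" using Qsets_meas[OF gf(3), of L] by measurable
    have "(\<integral>x. iexp (x L) \<partial>distr D nu (hat_shift v)) = (\<integral>x. iexp (hat_shift v x L) \<partial>D)"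
      by (rule integral_distr) (simp_all add: measurable_cong_sets[OF sD refl] mL)
    also have "\<dots> = (\<integral>x. rho v x *\<^sub>R iexp (hat_shift v x L) \<partial>nu)"
      unfolding D_def using rpos
      by (subst integral_density) (auto intro!: measurable_compose[OF mh mL])
    also have "\<dots> = (\<integral>x. exp (- (norm v)\<^sup>2 - 2 * x (\<lambda>\<phi>. inner v \<phi>)) *\<^sub>R iexp (x L + L v) \<partial>nu)"
      by (simp add: rho_def hat_shift_apply[OF L])
    also have "\<dots> = complex_of_real (exp (- (onorm L)\<^sup>2 / 4))"
      by (rule shift_char(2)[OF g False L])
    also have "\<dots> = (\<integral>x. iexp (x L) \<partial>nu)" by (rule gf(4)[OF L, symmetric])
    finally show "(\<integral>x. iexp (x L) \<partial>distr D nu (hat_shift v)) = (\<integral>x. iexp (x L) \<partial>nu)" .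
  qed
qed

lemma shift_nn_integral:
  fixes nu :: "(('q::{real_inner, complete_space} \<Rightarrow> real) \<Rightarrow> real) measure"
  assumes g: "gaussian_Qhat nu" and f: "f \<in> borel_measurable nu"
  shows "(\<integral>\<^sup>+x. f x \<partial>nu) = (\<integral>\<^sup>+x. ennreal (rho v x) * f (hat_shift v x) \<partial>nu)"
proof -
  note gf = gq_facts[OF g]
  have mr[measurable]: "rho v \<in> borel_measurable nu" by (rule rho_meas[OF gf(3)])
  have mh[measurable]: "hat_shift v \<in> measurable nu nu" by (rule hat_shift_meas[OF gf(3)])
  have "(\<integral>\<^sup>+x. f x \<partial>nu) = (\<integral>\<^sup>+x. f x \<partial>distr (density nu (\<lambda>x. ennreal (rho v x))) nu (hat_shift v))"
    by (simp only: shift_measure[OF g])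
  also have "\<dots> = (\<integral>\<^sup>+x. f (hat_shift v x) \<partial>density nu (\<lambda>x. ennreal (rho v x)))"
  proof (rule nn_integral_distr)
    show "hat_shift v \<in> measurable (density nu (\<lambda>x. ennreal (rho v x))) nu"
      unfolding measurable_cong_sets[OF sets_density refl] by (rule mh)
    show "f \<in> borel_measurable (distr (density nu (\<lambda>x. ennreal (rho v x))) nu (hat_shift v))"
      unfolding measurable_cong_sets[OF sets_distr refl] by (rule f)
  qed
  also have "\<dots> = (\<integral>\<^sup>+x. ennreal (rho v x) * f (hat_shift v x) \<partial>nu)"
    by (rule nn_integral_density) (auto intro!: measurable_compose[OF mh f])
  finally show ?thesis .
qed

lemma beta_norm_sq:
  assumes adm: "admissible br q \<Omega>"
  shows "(cmod (beta_hat \<theta> br q \<Omega> diff \<eta> \<eta>' x))\<^sup>2 = rho (q (diff \<eta>' \<eta>)) x"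
proof -
  have inn: "inner a b = Re (\<Omega> a b)" for a b using adm by (simp add: admissible_def)
  define v where "v = q (diff \<eta>' \<eta>)"
  have f: "(\<lambda>\<phi>. Re (\<Omega> v \<phi>)) = (\<lambda>\<phi>. inner v \<phi>)" by (simp add: inn)
  have vv: "Re (\<Omega> v v) = (norm v)\<^sup>2" by (simp add: inn[symmetric] power2_norm_eq_inner)
  have "cmod (beta_hat \<theta> br q \<Omega> diff \<eta> \<eta>' x) = exp (- Re (\<Omega> v v) / 2 - x (\<lambda>\<phi>. Re (\<Omega> v \<phi>)))"
    unfolding beta_hat_def v_def[symmetric] by simp
  also have "\<dots> = exp (- (norm v)\<^sup>2 / 2 - x (\<lambda>\<phi>. inner v \<phi>))" unfolding f vv ..
  finally have "(cmod (beta_hat \<theta> br q \<Omega> diff \<eta> \<eta>' x))\<^sup>2 = (exp (- (norm v)\<^sup>2 / 2 - x (\<lambda>\<phi>. inner v \<phi>)))\<^sup>2"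
    by simp
  also have "\<dots> = rho v x"
    unfolding rho_def by (simp add: exp_add[symmetric] power2_eq_square field_simps flip: exp_add)
  finally show ?thesis unfolding v_def .
qed

theorem lemma4p3:
  fixes add :: "'a \<Rightarrow> 'l::real_vector \<Rightarrow> 'a"
    and diff :: "'a \<Rightarrow> 'a \<Rightarrow> 'l"
    and \<theta> :: "'a \<Rightarrow> 'l \<Rightarrow> real"
    and br :: "'l \<Rightarrow> 'l \<Rightarrow> real"
    and q :: "'l \<Rightarrow> 'q::{real_inner, complete_space}"
    and \<Omega> :: "'q \<Rightarrow> 'q \<Rightarrow> complex"
    and nu :: "(('q \<Rightarrow> real) \<Rightarrow> real) measure"
    and \<eta> \<eta>' :: 'a
  assumes "torsor add diff"
    and "\<forall>\<eta>. linear (\<theta> \<eta>)"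
    and "bilinear br"
    and "\<forall>\<eta> \<xi> \<tau>. \<theta> (add \<eta> \<xi>) \<tau> = \<theta> \<eta> \<tau> + br \<xi> \<tau>"
    and "\<forall>\<xi>. (\<forall>\<xi>'. omega br \<xi> \<xi>' = 0) \<longrightarrow> \<xi> = 0"
    and "Mset br \<inter> Nset br = {0}"
    and "\<forall>\<tau>. \<exists>m\<in>Mset br. \<exists>n\<in>Nset br. \<tau> = m + n"
    and "quotient_map q (Mset br)"
    and "bilinear \<Omega>"
    and "\<forall>\<phi> \<phi>'. \<Omega> \<phi> \<phi>' = \<Omega> \<phi>' \<phi>"
    and "\<forall>\<phi>. \<phi> \<noteq> 0 \<longrightarrow> Re (\<Omega> \<phi> \<phi>) > 0"
    and "admissible br q \<Omega>"
    and "gaussian_Qhat nu"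
  shows "(\<forall>x\<in>Qhat. hat_shift (q (diff \<eta>' \<eta>)) x \<in> Qhat) \<and>
         (\<forall>\<psi>\<in>L2 nu. transf \<theta> br q \<Omega> diff \<eta> \<eta>' \<psi> \<in> L2 nu \<and>
                     L2norm nu (transf \<theta> br q \<Omega> diff \<eta> \<eta>' \<psi>) = L2norm nu \<psi>) \<and>
         (\<forall>\<psi>1\<in>L2 nu. \<forall>\<psi>2\<in>L2 nu. \<forall>a::complex.
             transf \<theta> br q \<Omega> diff \<eta> \<eta>' (\<lambda>x. a * \<psi>1 x + \<psi>2 x)
             = (\<lambda>x. a * transf \<theta> br q \<Omega> diff \<eta> \<eta>' \<psi>1 x + transf \<theta> br q \<Omega> diff \<eta> \<eta>' \<psi>2 x)) \<and>
         (\<forall>g\<in>L2 nu. \<exists>\<psi>\<in>L2 nu. \<forall>x\<in>space nu. transf \<theta> br q \<Omega> diff \<eta> \<eta>' \<psi> x = g x)"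
proof -
  note gf = gq_facts[OF assms(13)]
  interpret prob_space nu by (rule gf(1))
  have adm: "admissible br q \<Omega>" by (rule assms(12))
  define v where "v = q (diff \<eta>' \<eta>)"
  define B where "B = beta_hat \<theta> br q \<Omega> diff \<eta> \<eta>'"
  have ev[measurable]: "(\<lambda>x. x l) \<in> borel_measurable nu" for l :: "'q \<Rightarrow> real"
    by (rule Qsets_meas[OF gf(3)])
  have mB[measurable]: "B \<in> borel_measurable nu"
    unfolding B_def beta_hat_def by measurable
  have mh[measurable]: "hat_shift c \<in> measurable nu nu" for c :: 'q
    by (rule hat_shift_meas[OF gf(3)])
  have Bsq: "(cmod (B x))\<^sup>2 = rho v x" for x
    unfolding B_def v_def by (rule beta_norm_sq[OF adm])
  have rpos: "0 < rho v x" for x by (simp add: rho_def)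
  have B0: "B x \<noteq> 0" for x by (simp add: B_def beta_hat_def)
  have tr: "transf \<theta> br q \<Omega> diff \<eta> \<eta>' \<psi> = (\<lambda>x. \<psi> (hat_shift v x) * B x)" for \<psi>
    by (simp add: transf_def B_def v_def)
  have L2I: "\<phi> \<in> L2 nu" and L2eq: "(\<integral>x. (cmod (\<phi> x))\<^sup>2 \<partial>nu) = (\<integral>x. (cmod (\<psi> x))\<^sup>2 \<partial>nu)"
    if \<psi>: "\<psi> \<in> L2 nu" and m\<phi>: "\<phi> \<in> borel_measurable nu"
      and nn: "(\<integral>\<^sup>+x. ennreal ((cmod (\<phi> x))\<^sup>2) \<partial>nu) = (\<integral>\<^sup>+x. ennreal ((cmod (\<psi> x))\<^sup>2) \<partial>nu)"
    for \<phi> \<psi> :: "(('q \<Rightarrow> real) \<Rightarrow> real) \<Rightarrow> complex"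
  proof -
    have m\<psi>: "\<psi> \<in> borel_measurable nu" and i\<psi>: "integrable nu (\<lambda>x. (cmod (\<psi> x))\<^sup>2)"
      using \<psi> by (auto simp: L2_def)
    have e\<psi>: "(\<integral>\<^sup>+x. ennreal ((cmod (\<psi> x))\<^sup>2) \<partial>nu) = ennreal (\<integral>x. (cmod (\<psi> x))\<^sup>2 \<partial>nu)"
      using i\<psi> by (intro nn_integral_eq_integral) auto
    have m2: "(\<lambda>x. (cmod (\<phi> x))\<^sup>2) \<in> borel_measurable nu" using m\<phi> by measurable
    have i\<phi>: "integrable nu (\<lambda>x. (cmod (\<phi> x))\<^sup>2)"
      by (rule integrableI_nn_integral_finite[OF m2 _ nn[unfolded e\<psi>]]) auto
    show "\<phi> \<in> L2 nu" using m\<phi> i\<phi> by (simp add: L2_def)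
    have "(\<integral>x. (cmod (\<phi> x))\<^sup>2 \<partial>nu) = enn2real (\<integral>\<^sup>+x. ennreal ((cmod (\<phi> x))\<^sup>2) \<partial>nu)"
      using m2 by (intro integral_eq_nn_integral) auto
    also have "\<dots> = enn2real (\<integral>\<^sup>+x. ennreal ((cmod (\<psi> x))\<^sup>2) \<partial>nu)" by (simp only: nn)
    also have "\<dots> = (\<integral>x. (cmod (\<psi> x))\<^sup>2 \<partial>nu)"
      using m\<psi> by (intro integral_eq_nn_integral[symmetric]) auto
    finally show "(\<integral>x. (cmod (\<phi> x))\<^sup>2 \<partial>nu) = (\<integral>x. (cmod (\<psi> x))\<^sup>2 \<partial>nu)" .
  qed
  have part1: "\<forall>x\<in>Qhat. hat_shift (q (diff \<eta>' \<eta>)) x \<in> Qhat"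
    by (auto intro: hat_shift_Qhat)
  have part2: "\<forall>\<psi>\<in>L2 nu. transf \<theta> br q \<Omega> diff \<eta> \<eta>' \<psi> \<in> L2 nu \<and>
                     L2norm nu (transf \<theta> br q \<Omega> diff \<eta> \<eta>' \<psi>) = L2norm nu \<psi>"
  proof
    fix \<psi> assume \<psi>: "\<psi> \<in> L2 nu"
    have m\<psi>[measurable]: "\<psi> \<in> borel_measurable nu" using \<psi> by (simp add: L2_def)
    have m\<phi>: "(\<lambda>x. \<psi> (hat_shift v x) * B x) \<in> borel_measurable nu" by measurable
    have nn: "(\<integral>\<^sup>+x. ennreal ((cmod (\<psi> (hat_shift v x) * B x))\<^sup>2) \<partial>nu) = (\<integral>\<^sup>+x. ennreal ((cmod (\<psi> x))\<^sup>2) \<partial>nu)"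
    proof -
      have "(\<integral>\<^sup>+x. ennreal ((cmod (\<psi> x))\<^sup>2) \<partial>nu) =
            (\<integral>\<^sup>+x. ennreal (rho v x) * ennreal ((cmod (\<psi> (hat_shift v x)))\<^sup>2) \<partial>nu)"
        by (rule shift_nn_integral[OF assms(13)]) measurable
      also have "\<dots> = (\<integral>\<^sup>+x. ennreal ((cmod (\<psi> (hat_shift v x) * B x))\<^sup>2) \<partial>nu)"
      proof (rule nn_integral_cong)
        fix x
        have "(cmod (\<psi> (hat_shift v x) * B x))\<^sup>2 = rho v x * (cmod (\<psi> (hat_shift v x)))\<^sup>2"
          by (simp add: norm_mult power_mult_distrib Bsq)
        then show "ennreal (rho v x) * ennreal ((cmod (\<psi> (hat_shift v x)))\<^sup>2) = ennreal ((cmod (\<psi> (hat_shift v x) * B x))\<^sup>2)"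
          using rpos[of x] by (simp add: ennreal_mult'')
      qed
      finally show ?thesis by simp
    qed
    show "transf \<theta> br q \<Omega> diff \<eta> \<eta>' \<psi> \<in> L2 nu \<and> L2norm nu (transf \<theta> br q \<Omega> diff \<eta> \<eta>' \<psi>) = L2norm nu \<psi>"
      unfolding tr L2norm_def using L2I[OF \<psi> m\<phi> nn] L2eq[OF \<psi> m\<phi> nn] by simp
  qed
  have part3: "\<forall>\<psi>1\<in>L2 nu. \<forall>\<psi>2\<in>L2 nu. \<forall>a::complex.
             transf \<theta> br q \<Omega> diff \<eta> \<eta>' (\<lambda>x. a * \<psi>1 x + \<psi>2 x)
             = (\<lambda>x. a * transf \<theta> br q \<Omega> diff \<eta> \<eta>' \<psi>1 x + transf \<theta> br q \<Omega> diff \<eta> \<eta>' \<psi>2 x)"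
    by (simp add: transf_def algebra_simps)
  have part4: "\<forall>g\<in>L2 nu. \<exists>\<psi>\<in>L2 nu. \<forall>x\<in>space nu. transf \<theta> br q \<Omega> diff \<eta> \<eta>' \<psi> x = g x"
  proof
    fix g assume g: "g \<in> L2 nu"
    have mg[measurable]: "g \<in> borel_measurable nu" using g by (simp add: L2_def)
    define \<psi> where "\<psi> y = g (hat_shift (-v) y) / B (hat_shift (-v) y)" for y
    have m\<psi>: "\<psi> \<in> borel_measurable nu" unfolding \<psi>_def by measurable
    have bk: "\<psi> (hat_shift v x) = g x / B x" if "x \<in> space nu" for x
      using that gf(2) by (simp add: \<psi>_def hat_shift_inv)
    have nn: "(\<integral>\<^sup>+x. ennreal ((cmod (\<psi> x))\<^sup>2) \<partial>nu) = (\<integral>\<^sup>+x. ennreal ((cmod (g x))\<^sup>2) \<partial>nu)"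
    proof -
      have "(\<integral>\<^sup>+x. ennreal ((cmod (\<psi> x))\<^sup>2) \<partial>nu) =
            (\<integral>\<^sup>+x. ennreal (rho v x) * ennreal ((cmod (\<psi> (hat_shift v x)))\<^sup>2) \<partial>nu)"
        by (rule shift_nn_integral[OF assms(13)]) (use m\<psi> in measurable)
      also have "\<dots> = (\<integral>\<^sup>+x. ennreal ((cmod (g x))\<^sup>2) \<partial>nu)"
      proof (rule nn_integral_cong)
        fix x assume x: "x \<in> space nu"
        have "rho v x * (cmod (\<psi> (hat_shift v x)))\<^sup>2 = (cmod (g x))\<^sup>2"
          using Bsq[of x] B0[of x] rpos[of x] unfolding bk[OF x]
          by (simp add: norm_divide power_divide)
        then show "ennreal (rho v x) * ennreal ((cmod (\<psi> (hat_shift v x)))\<^sup>2) = ennreal ((cmod (g x))\<^sup>2)"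
          using rpos[of x] by (simp add: ennreal_mult''[symmetric])
      qed
      finally show ?thesis .
    qed
    show "\<exists>\<psi>\<in>L2 nu. \<forall>x\<in>space nu. transf \<theta> br q \<Omega> diff \<eta> \<eta>' \<psi> x = g x"
    proof (intro bexI ballI)
      show "\<psi> \<in> L2 nu" by (rule L2I[OF g m\<psi> nn])
      fix x assume "x \<in> space nu"
      then show "transf \<theta> br q \<Omega> diff \<eta> \<eta>' \<psi> x = g x"
        unfolding tr using bk B0[of x] by simp
    qed
  qed
  show ?thesis using part1 part2 part3 part4 by blast
qed

end
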